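(* In the multimodal learning problem $(\mathcal{X},\mathcal{Y},\mathcal{Z})$ described below, assume $m\ge 3n$ and that among the $m$ data points there exist $3n$ points whose $x_i$ are linearly independent. Then $(\mathcal{X},\mathcal{Y},\mathcal{Z})$ is properly learnable with $\mathcal{S}$ (applied to $x$ only) in $O(mn^2)$ time: there is an algorithm which, given the data points $(x_i,y_i,z_i)_{i=1}^m$, outputs in $O(mn^2)$ time a hypothesis $h\in\mathcal{S}$ with $h(x_i)=z_i$ for all $i=1,\dots,m$.
   Context: Fix $n$. For unit vectors $v_1,v_2\in\mathbb{R}^n$, let $F(v_1,v_2)\in\mathbb{R}^{2n\times 2n}$ be a fixed orthogonal matrix whose first column is $(v_1/\sqrt2,\,v_2/\sqrt2)$, and let $Q(v_1,v_2)=\begin{pmatrix} I_n & 0\\ 0 & F(v_1,v_2)\end{pmatrix}\in\mathbb{R}^{3n\times 3n}$. The multimodal learning problem $(\mathcal{X},\mathcal{Y},\mathcal{Z})$: one is given $m$ data points $(x_i,y_i,z_i)$ with $x_i,y_i\in\mathbb{R}^{3n}$, $z_i\in\{+,-\}$, such that there exist unknown unit vectors $r_1,r_2\in\mathbb{R}^n$ and constants $c_1,c_2\in\mathbb{R}$ for which every $x_i$ is labeled $z_i$ correctly by $\hat H_1\cap\hat H_2$, where $\hat H_j=\{x\in\mathbb{R}^{3n}: \hat r_j^\top x\le c_j\}$, $\hat r_j=(r_j,\mathbf{0}_{2n})$ ('+' iff inside the intersection), and $y_i=Q(r_1,r_2)x_i$ for all $i$. The hypothesis set is $\mathcal{S}=\{h: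 h(x)=\mathrm{sgn}(\min(c_1-r_1^\top x,\,c_2-r_2^\top x)),\ c_i\in\mathbb{R},\ \|r_i\|_2=1\}$ (intersections of two half-spaces in $\mathbb{R}^{3n}$), with $\mathrm{sgn}$ of a nonnegative number taken as '+'. *)

theory Defs
  imports Complex_Main
begin

text \<open>Every elementary instruction and every loop/branch test costs one unit of time.\<close>

type_synonym state = "(nat \<Rightarrow> int) \<times> (nat \<Rightarrow> real)"

datatype iexp = IConst int | ILoad iexp | IAdd iexp iexp | ISub iexp iexp | IMul iexp iexp

datatype rexp = RConst rat | RLoad iexp | RofInt iexp | RAdd rexp rexp | RSub rexp rexp
  | RMul rexp rexp | RDiv rexp rexp | RSqrt rexp

datatype bexp = ILe iexp iexp | RLe rexp rexp | BNot bexp | BAnd bexp bexp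

datatype com = Skip | IStore iexp iexp | RStore iexp rexp | Seq com com
  | If bexp com com | While bexp com

fun ieval :: "iexp \<Rightarrow> state \<Rightarrow> int" where
  "ieval (IConst c) s = c"
| "ieval (ILoad a) s = fst s (nat (ieval a s))"
| "ieval (IAdd a b) s = ieval a s + ieval b s"
| "ieval (ISub a b) s = ieval a s - ieval b s"
| "ieval (IMul a b) s = ieval a s * ieval b s"

fun reval :: "rexp \<Rightarrow> state \<Rightarrow> real" where
  "reval (RConst c) s = of_rat c"
| "reval (RLoad a) s = snd s (nat (ieval a s))"
| "reval (RofInt a) s = of_int (ieval a s)"
| "reval (RAdd a b) s = reval a s + reval b s"
| "reval (RSub a b) s = reval a s - reval b s"
| "reval (RMul a b) s = reval a s * reval b s"
| "reval (RDiv a b) s = reval a s / reval b s"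
| "reval (RSqrt a) s = sqrt (reval a s)"

fun beval :: "bexp \<Rightarrow> state \<Rightarrow> bool" where
  "beval (ILe a b) s = (ieval a s \<le> ieval b s)"
| "beval (RLe a b) s = (reval a s \<le> reval b s)"
| "beval (BNot b) s = (\<not> beval b s)"
| "beval (BAnd a b) s = (beval a s \<and> beval b s)"

inductive exec :: "com \<Rightarrow> state \<Rightarrow> nat \<Rightarrow> state \<Rightarrow> bool" where
  exec_Skip: "exec Skip s 1 s"
| exec_IStore: "exec (IStore a e) s 1 ((fst s)(nat (ieval a s) := ieval e s), snd s)"
| exec_RStore: "exec (RStore a e) s 1 (fst s, (snd s)(nat (ieval a s) := reval e s))"
| exec_Seq: "exec c1 s t1 s1 \<Longrightarrow> exec c2 s1 t2 s2 \<Longrightarrow> exec (Seq c1 c2) s (t1 + t2) s2"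
| exec_IfT: "beval b s \<Longrightarrow> exec c1 s t s' \<Longrightarrow> exec (If b c1 c2) s (Suc t) s'"
| exec_IfF: "\<not> beval b s \<Longrightarrow> exec c2 s t s' \<Longrightarrow> exec (If b c1 c2) s (Suc t) s'"
| exec_WhileF: "\<not> beval b s \<Longrightarrow> exec (While b c) s 1 s"
| exec_WhileT: "beval b s \<Longrightarrow> exec c s t1 s1 \<Longrightarrow> exec (While b c) s1 t2 s2 \<Longrightarrow>
     exec (While b c) s (Suc (t1 + t2)) s2"

text \<open>Vectors in R^d are functions nat => real, only coordinates < d matter.
  Data point i (i < m): x i :: nat => real in R^{3n}, y i in R^{3n}, label z i
  (True = '+', False = '-').\<close>

definition unit_vec :: "nat \<Rightarrow> (nat \<Rightarrow> real) \<Rightarrow> bool" where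
  "unit_vec d v \<longleftrightarrow> (\<Sum>k<d. (v k)\<^sup>2) = 1"

text \<open>F assigns to unit vectors v1, v2 in R^n an orthogonal 2n x 2n matrix (entries F v1 v2 a b,
  a = row, b = column) whose first column is (v1/sqrt 2, v2/sqrt 2).\<close>
definition admissible_F :: "nat \<Rightarrow> ((nat \<Rightarrow> real) \<Rightarrow> (nat \<Rightarrow> real) \<Rightarrow> nat \<Rightarrow> nat \<Rightarrow> real) \<Rightarrow> bool" where
  "admissible_F n F \<longleftrightarrow> (\<forall>v1 v2. unit_vec n v1 \<and> unit_vec n v2 \<longrightarrow>
      (\<forall>a<2*n. \<forall>b<2*n. (\<Sum>l<2*n. F v1 v2 l a * F v1 v2 l b) = (if a = b then 1 else 0)) \<and>
      (\<forall>k<n. F v1 v2 k 0 = v1 k / sqrt 2 \<and> F v1 v2 (n + k) 0 = v2 k / sqrt 2))"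

text \<open>Q(v1,v2) = diag(I_n, F(v1,v2)) applied to x in R^{3n}.\<close>
definition Qmap :: "nat \<Rightarrow> ((nat \<Rightarrow> real) \<Rightarrow> (nat \<Rightarrow> real) \<Rightarrow> nat \<Rightarrow> nat \<Rightarrow> real) \<Rightarrow>
    (nat \<Rightarrow> real) \<Rightarrow> (nat \<Rightarrow> real) \<Rightarrow> (nat \<Rightarrow> real) \<Rightarrow> nat \<Rightarrow> real" where
  "Qmap n F v1 v2 x = (\<lambda>k. if k < n then x k
      else (\<Sum>b<2*n. F v1 v2 (k - n) b * x (n + b)))"

definition mm_instance :: "nat \<Rightarrow> nat \<Rightarrow> ((nat \<Rightarrow> real) \<Rightarrow> (nat \<Rightarrow> real) \<Rightarrow> nat \<Rightarrow> nat \<Rightarrow> real) \<Rightarrow>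
    (nat \<Rightarrow> nat \<Rightarrow> real) \<Rightarrow> (nat \<Rightarrow> nat \<Rightarrow> real) \<Rightarrow> (nat \<Rightarrow> bool) \<Rightarrow> bool" where
  "mm_instance n m F x y z \<longleftrightarrow>
    (\<exists>r1 r2 c1 c2. unit_vec n r1 \<and> unit_vec n r2 \<and>
      (\<forall>i<m. z i \<longleftrightarrow> ((\<Sum>k<n. r1 k * x i k) \<le> c1 \<and> (\<Sum>k<n. r2 k * x i k) \<le> c2)) \<and>
      (\<forall>i<m. \<forall>k<3*n. y i k = Qmap n F r1 r2 (x i) k))"

definition has_3n_indep :: "nat \<Rightarrow> nat \<Rightarrow> (nat \<Rightarrow> nat \<Rightarrow> real) \<Rightarrow> bool" where
  "has_3n_indep n m x \<longleftrightarrow> (\<exists>S \<subseteq> {..<m}. card S = 3*n \<and>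
     (\<forall>a :: nat \<Rightarrow> real. (\<forall>k<3*n. (\<Sum>i\<in>S. a i * x i k) = 0) \<longrightarrow> (\<forall>i\<in>S. a i = 0)))"

text \<open>The hypothesis h(x) = sgn(min(c1 - r1^T x, c2 - r2^T x)) of S, with r_j unit in R^{3n}
  (sgn of a nonnegative number is '+').\<close>
definition hyp :: "nat \<Rightarrow> (nat \<Rightarrow> real) \<Rightarrow> (nat \<Rightarrow> real) \<Rightarrow> real \<Rightarrow> real \<Rightarrow> (nat \<Rightarrow> real) \<Rightarrow> bool" where
  "hyp n r1 r2 c1 c2 v \<longleftrightarrow> min (c1 - (\<Sum>k<3*n. r1 k * v k)) (c2 - (\<Sum>k<3*n. r2 k * v k)) \<ge> 0"

text \<open>Input encoding: integer registers 0,1 hold n, m; register 2+i holds the label of point i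
  (1 for '+', 0 for '-'); real registers hold x_i(k) at 3n*i+k and y_i(k) at 3nm+3n*i+k.\<close>
definition init_state :: "nat \<Rightarrow> nat \<Rightarrow> (nat \<Rightarrow> nat \<Rightarrow> real) \<Rightarrow> (nat \<Rightarrow> nat \<Rightarrow> real) \<Rightarrow>
    (nat \<Rightarrow> bool) \<Rightarrow> state" where
  "init_state n m x y z =
    ((\<lambda>j. if j = 0 then int n else if j = 1 then int m
          else if 2 \<le> j \<and> j < m + 2 then (if z (j - 2) then 1 else 0) else 0),
     (\<lambda>j. if j < 3*n*m then x (j div (3*n)) (j mod (3*n))
          else if j < 6*n*m then y ((j - 3*n*m) div (3*n)) ((j - 3*n*m) mod (3*n))
          else 0))"

definition out_r1 :: "nat \<Rightarrow> state \<Rightarrow> nat \<Rightarrow> real" where "out_r1 n s = (\<lambda>k. snd s k)"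
definition out_r2 :: "nat \<Rightarrow> state \<Rightarrow> nat \<Rightarrow> real" where "out_r2 n s = (\<lambda>k. snd s (3*n + k))"
definition out_c1 :: "nat \<Rightarrow> state \<Rightarrow> real" where "out_c1 n s = snd s (6*n)"
definition out_c2 :: "nat \<Rightarrow> state \<Rightarrow> real" where "out_c2 n s = snd s (6*n + 1)"

end

theory Submission
  imports Defs "HOL-Library.Function_Algebras"
begin

definition fsc :: "real \<Rightarrow> (nat \<Rightarrow> real) \<Rightarrow> nat \<Rightarrow> real" where
  "fsc c f = (\<lambda>k. c * f k)"

interpretation fv: vector_space fsc
  by unfold_locales (auto simp: fsc_def fun_eq_iff algebra_simps)

definition trunc :: "nat \<Rightarrow> (nat \<Rightarrow> real) \<Rightarrow> nat \<Rightarrow> real" where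
  "trunc N v = (\<lambda>k. if k < N then v k else 0)"

definition ev :: "nat \<Rightarrow> nat \<Rightarrow> real" where
  "ev j = (\<lambda>k. if k = j then 1 else 0)"

lemma sum_fun_apply: "(\<Sum>v\<in>A. (f v :: nat \<Rightarrow> real)) k = (\<Sum>v\<in>A. f v k)"
  by (induction A rule: infinite_finite_induct) auto

lemma indep_from_family:
  assumes indep: "\<forall>a :: nat \<Rightarrow> real. (\<forall>k<N. (\<Sum>i\<in>S. a i * x i k) = 0) \<longrightarrow> (\<forall>i\<in>S. a i = 0)"
    and fin: "finite S"
  shows "inj_on (\<lambda>i. trunc N (x i)) S \<and> fv.independent ((\<lambda>i. trunc N (x i)) ` S)"
proof
  show inj: "inj_on (\<lambda>i. trunc N (x i)) S"
  proof (rule inj_onI, rule ccontr)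
    fix i i' assume ii: "i \<in> S" "i' \<in> S" "trunc N (x i) = trunc N (x i')" "i \<noteq> i'"
    define a where "a = (\<lambda>j. if j = i then (1::real) else if j = i' then -1 else 0)"
    have "\<forall>k<N. (\<Sum>j\<in>S. a j * x j k) = 0"
    proof (intro allI impI)
      fix k assume k: "k < N"
      have xe: "x i k = x i' k" using ii(3) k by (auto simp: trunc_def fun_eq_iff dest: spec[of _ k])
      have "(\<Sum>j\<in>S. a j * x j k) = (\<Sum>j\<in>{i,i'}. a j * x j k)"
        using ii fin by (intro sum.mono_neutral_right) (auto simp: a_def)
      also have "\<dots> = 0" using ii xe by (simp add: a_def)
      finally show "(\<Sum>j\<in>S. a j * x j k) = 0" .
    qed
    with indep ii show False by (auto simp: a_def dest!: spec[of _ a])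
  qed
  show "fv.independent ((\<lambda>i. trunc N (x i)) ` S)"
    unfolding fv.independent_explicit_module
  proof (intro allI impI)
    fix t u v
    assume t: "finite t" "t \<subseteq> (\<lambda>i. trunc N (x i)) ` S" "(\<Sum>v\<in>t. fsc (u v) v) = 0" "v \<in> t"
    define a where "a = (\<lambda>j. if j \<in> S \<and> trunc N (x j) \<in> t then u (trunc N (x j)) else 0)"
    have "\<forall>k<N. (\<Sum>j\<in>S. a j * x j k) = 0"
    proof (intro allI impI)
      fix k assume k: "k < N"
      have "(\<Sum>j\<in>S. a j * x j k) = (\<Sum>j\<in>{j\<in>S. trunc N (x j) \<in> t}. u (trunc N (x j)) * trunc N (x j) k)"
        using fin k by (intro sum.mono_neutral_cong_right) (auto simp: a_def trunc_def)
      also have "\<dots> = (\<Sum>w\<in>(\<lambda>i. trunc N (x i)) ` {j\<in>S. trunc N (x j) \<in> t}. u w * w k)"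
        using inj by (subst sum.reindex) (auto intro: inj_on_subset)
      also have "(\<lambda>i. trunc N (x i)) ` {j\<in>S. trunc N (x j) \<in> t} = t" using t(2) by auto
      also have "(\<Sum>w\<in>t. u w * w k) = (\<Sum>w\<in>t. fsc (u w) w) k"
        by (simp add: sum_fun_apply fsc_def)
      also have "\<dots> = 0" using t(3) by simp
      finally show "(\<Sum>j\<in>S. a j * x j k) = 0" .
    qed
    with indep have a0: "\<forall>j\<in>S. a j = 0" by blast
    from t obtain j where "j \<in> S" "v = trunc N (x j)" by auto
    with a0 t show "u v = 0" by (auto simp: a_def)
  qed
qed

lemma no_pivot_contra:
  fixes M :: "nat \<Rightarrow> nat \<Rightarrow> real"
  assumes indep: "\<forall>a :: nat \<Rightarrow> real. (\<forall>k<N. (\<Sum>i\<in>S. a i * x i k) = 0) \<longrightarrow> (\<forall>i\<in>S. a i = 0)"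
    and S: "S \<subseteq> {..<m}" "card S = N"
    and sp: "\<forall>i<m. trunc N (x i) \<in> fv.span ((\<lambda>j. trunc N (M j)) ` {..<m})"
    and zero: "\<forall>j. c \<le> j \<and> j < m \<longrightarrow> (\<forall>k\<le>c. M j k = 0)"
    and c: "c < N"
  shows False
proof -
  have fin: "finite S" using S(1) finite_subset by blast
  note ind = indep_from_family[OF indep fin]
  define T where "T = (\<lambda>j. trunc N (M j)) ` {..<c} \<union> ev ` {c<..<N}"
  have finT: "finite T" by (simp add: T_def)
  have cardT: "card T < N"
  proof -
    have "card T \<le> card ((\<lambda>j. trunc N (M j)) ` {..<c}) + card (ev ` {c<..<N})"
      unfolding T_def by (rule card_Un_le)
    also have "\<dots> \<le> c + (N - Suc c)"
      by (intro add_mono card_image_le[THEN order_trans]) auto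
    finally show ?thesis using c by linarith
  qed
  have rows: "trunc N (M j) \<in> fv.span T" if j: "j < m" for j
  proof (cases "j < c")
    case True then show ?thesis by (intro fv.span_base) (auto simp: T_def)
  next
    case False
    have eq: "trunc N (M j) = (\<Sum>k\<in>{c<..<N}. fsc (M j k) (ev k))"
    proof
      fix k'
      show "trunc N (M j) k' = (\<Sum>k\<in>{c<..<N}. fsc (M j k) (ev k)) k'"
      proof (cases "c < k' \<and> k' < N")
        case True
        have "(\<Sum>k\<in>{c<..<N}. fsc (M j k) (ev k)) k' = (\<Sum>k\<in>{c<..<N}. M j k * ev k k')"
          by (simp add: sum_fun_apply fsc_def)
        also have "\<dots> = (\<Sum>k\<in>{c<..<N}. if k' = k then M j k else 0)"
          by (intro sum.cong) (auto simp: ev_def)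
        also have "\<dots> = M j k'" using True by (simp add: sum.delta)
        finally show ?thesis using True by (simp add: trunc_def)
      next
        case F: False
        have "(\<Sum>k\<in>{c<..<N}. fsc (M j k) (ev k)) k' = (\<Sum>k\<in>{c<..<N}. M j k * ev k k')"
          by (simp add: sum_fun_apply fsc_def)
        also have "\<dots> = 0" using F by (intro sum.neutral) (auto simp: ev_def)
        finally show ?thesis using F False zero j by (auto simp: trunc_def)
      qed
    qed
    show ?thesis unfolding eq
      by (intro fv.span_sum fv.span_scale fv.span_base) (auto simp: T_def)
  qed
  have "fv.span ((\<lambda>j. trunc N (M j)) ` {..<m}) \<subseteq> fv.span T"
    using rows by (intro fv.span_minimal) (auto simp: fv.subspace_span)
  with sp S(1) have "(\<lambda>i. trunc N (x i)) ` S \<subseteq> fv.span T" by auto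
  from fv.independent_span_bound[OF finT conjunct2[OF ind] this]
  have "card ((\<lambda>i. trunc N (x i)) ` S) \<le> card T" by simp
  moreover have "card ((\<lambda>i. trunc N (x i)) ` S) = N" using ind S by (simp add: card_image)
  ultimately show False using cardT by simp
qed

definition mswap :: "(nat \<Rightarrow> nat \<Rightarrow> real) \<Rightarrow> nat \<Rightarrow> nat \<Rightarrow> nat \<Rightarrow> nat \<Rightarrow> real" where
  "mswap M a b = (\<lambda>j. if j = a then M b else if j = b then M a else M j)"

definition melim :: "(nat \<Rightarrow> nat \<Rightarrow> real) \<Rightarrow> nat \<Rightarrow> nat \<Rightarrow> nat \<Rightarrow> real" where
  "melim M c = (\<lambda>j. if j = c then M c else (\<lambda>k. M j k - (M j c / M c c) * M c k))"

definition invQ :: "nat \<Rightarrow> nat \<Rightarrow> ((nat \<Rightarrow> real) \<Rightarrow> nat \<Rightarrow> real) \<Rightarrow> (nat \<Rightarrow> nat \<Rightarrow> real) \<Rightarrow> bool" where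
  "invQ N m Qf M \<longleftrightarrow> (\<forall>j<m. \<forall>k<N. M j (N + k) = Qf (M j) k)"

definition invS :: "nat \<Rightarrow> nat \<Rightarrow> (nat \<Rightarrow> nat \<Rightarrow> real) \<Rightarrow> (nat \<Rightarrow> nat \<Rightarrow> real) \<Rightarrow> bool" where
  "invS N m x M \<longleftrightarrow> (\<forall>i<m. trunc N (x i) \<in> fv.span ((\<lambda>j. trunc N (M j)) ` {..<m}))"

definition invE :: "nat \<Rightarrow> nat \<Rightarrow> (nat \<Rightarrow> nat \<Rightarrow> real) \<Rightarrow> bool" where
  "invE m c M \<longleftrightarrow> (\<forall>j<c. M j j \<noteq> 0 \<and> (\<forall>k<c. k \<noteq> j \<longrightarrow> M j k = 0)) \<and>
     (\<forall>j. c \<le> j \<and> j < m \<longrightarrow> (\<forall>k<c. M j k = 0))"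

definition linQ :: "nat \<Rightarrow> ((nat \<Rightarrow> real) \<Rightarrow> nat \<Rightarrow> real) \<Rightarrow> bool" where
  "linQ N Qf \<longleftrightarrow> (\<forall>a b f k. k < N \<longrightarrow> Qf (\<lambda>i. a i - f * b i) k = Qf a k - f * Qf b k)"

lemma invQ_swap: "invQ N m Qf M \<Longrightarrow> a < m \<Longrightarrow> b < m \<Longrightarrow> invQ N m Qf (mswap M a b)"
  by (auto simp: invQ_def mswap_def)

lemma invS_swap: "invS N m x M \<Longrightarrow> a < m \<Longrightarrow> b < m \<Longrightarrow> invS N m x (mswap M a b)"
proof -
  assume "invS N m x M" "a < m" "b < m"
  moreover have "(\<lambda>j. trunc N (mswap M a b j)) ` {..<m} = (\<lambda>j. trunc N (M j)) ` {..<m}"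
    using \<open>a < m\<close> \<open>b < m\<close> unfolding mswap_def
    by (auto simp: image_iff) (metis lessThan_iff)+
  ultimately show ?thesis by (simp add: invS_def)
qed

lemma invE_swap: "invE m c M \<Longrightarrow> c \<le> p \<Longrightarrow> p < m \<Longrightarrow> invE m c (mswap M c p)"
  by (auto simp: invE_def mswap_def)

lemma invQ_elim: "invQ N m Qf M \<Longrightarrow> linQ N Qf \<Longrightarrow> c < m \<Longrightarrow> invQ N m Qf (melim M c)"
  unfolding invQ_def melim_def linQ_def
proof (intro allI impI)
  fix j k assume a: "\<forall>j<m. \<forall>k<N. M j (N + k) = Qf (M j) k"
    "\<forall>a b f k. k < N \<longrightarrow> Qf (\<lambda>i. a i - f * b i) k = Qf a k - f * Qf b k" "c < m" "j < m" "k < N"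
  show "(if j = c then M c else (\<lambda>k. M j k - M j c / M c c * M c k)) (N + k) =
        Qf (if j = c then M c else (\<lambda>k. M j k - M j c / M c c * M c k)) k"
    using a a(2)[rule_format, of k "M j" "M j c / M c c" "M c"] by auto
qed

lemma invS_elim:
  assumes "invS N m x M" "c < m"
  shows "invS N m x (melim M c)"
proof -
  have "trunc N (M j) \<in> fv.span ((\<lambda>j. trunc N (melim M c j)) ` {..<m})" if j: "j < m" for j
  proof (cases "j = c")
    case True then show ?thesis using j by (intro fv.span_base) (auto simp: melim_def)
  next
    case False
    have eq: "trunc N (M j) = trunc N (melim M c j) + fsc (M j c / M c c) (trunc N (melim M c c))"
      using False by (auto simp: melim_def fun_eq_iff trunc_def fsc_def)
    show ?thesis unfolding eq using j assms(2)
      by (intro fv.span_add fv.span_scale fv.span_base) auto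
  qed
  then have "fv.span ((\<lambda>j. trunc N (M j)) ` {..<m}) \<subseteq> fv.span ((\<lambda>j. trunc N (melim M c j)) ` {..<m})"
    by (intro fv.span_minimal) (auto simp: fv.subspace_span)
  with assms(1) show ?thesis by (auto simp: invS_def)
qed

lemma invE_elim:
  assumes "invE m c M" "c < m" "M c c \<noteq> 0"
  shows "invE m (Suc c) (melim M c)"
  using assms unfolding invE_def melim_def
  by (auto simp: less_Suc_eq)

lemma gj_step:
  assumes indep: "\<forall>a :: nat \<Rightarrow> real. (\<forall>k<N. (\<Sum>i\<in>S. a i * x i k) = 0) \<longrightarrow> (\<forall>i\<in>S. a i = 0)"
    and S: "S \<subseteq> {..<m}" "card S = N"
    and inv: "invQ N m Qf M" "invS N m x M" "invE m c M" and lin: "linQ N Qf"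
    and c: "c < N"
  shows "\<exists>p. c \<le> p \<and> p < m \<and> M p c \<noteq> 0"
proof (rule ccontr)
  assume "\<not> ?thesis"
  then have "\<forall>j. c \<le> j \<and> j < m \<longrightarrow> (\<forall>k\<le>c. M j k = 0)"
    using inv(3) unfolding invE_def by (metis le_neq_implies_less)
  then show False
    using no_pivot_contra[OF indep S, of M c] inv(2) c unfolding invS_def by blast
qed

lemma gj_step2:
  assumes inv: "invQ N m Qf M" "invS N m x M" "invE m c M" and lin: "linQ N Qf"
    and p: "c \<le> p" "p < m" "M p c \<noteq> 0"
  shows "invQ N m Qf (melim (mswap M c p) c) \<and> invS N m x (melim (mswap M c p) c)
     \<and> invE m (Suc c) (melim (mswap M c p) c)"
proof -
  have cm: "c < m" using p by simp
  have "mswap M c p c c \<noteq> 0" using p by (simp add: mswap_def)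
  then show ?thesis using inv lin p cm
    by (meson invE_elim invE_swap invQ_elim invQ_swap invS_elim invS_swap)
qed

definition locQ :: "nat \<Rightarrow> ((nat \<Rightarrow> real) \<Rightarrow> nat \<Rightarrow> real) \<Rightarrow> bool" where
  "locQ N Qf \<longleftrightarrow> (\<forall>a b k. (\<forall>i<N. a i = b i) \<longrightarrow> Qf a k = Qf b k)"

lemma invQ_cong: "(\<And>j k. j < m \<Longrightarrow> k < 2*N \<Longrightarrow> M j k = M' j k) \<Longrightarrow> locQ N Qf \<Longrightarrow> invQ N m Qf M \<Longrightarrow> invQ N m Qf M'"
  unfolding invQ_def locQ_def
proof (intro allI impI)
  fix j k assume h: "\<And>j k. j < m \<Longrightarrow> k < 2*N \<Longrightarrow> M j k = M' j k" "\<forall>a b k. (\<forall>i<N. a i = b i) \<longrightarrow> Qf a k = Qf b k"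
    "\<forall>j<m. \<forall>k<N. M j (N + k) = Qf (M j) k" "j < m" "k < N"
  have "Qf (M j) k = Qf (M' j) k" using h(1)[of j] h(2,4) by auto
  moreover have "M j (N + k) = M' j (N + k)" using h(1)[of j "N+k"] h(4,5) by simp
  ultimately show "M' j (N + k) = Qf (M' j) k" using h(3,4,5) by auto
qed

lemma invS_cong: "(\<And>j k. j < m \<Longrightarrow> k < 2*N \<Longrightarrow> M j k = M' j k) \<Longrightarrow> invS N m x M \<Longrightarrow> invS N m x M'"
proof -
  assume h: "\<And>j k. j < m \<Longrightarrow> k < 2*N \<Longrightarrow> M j k = M' j k" "invS N m x M"
  have "(\<lambda>j. trunc N (M j)) ` {..<m} = (\<lambda>j. trunc N (M' j)) ` {..<m}"
    using h(1) by (intro image_cong) (auto simp: trunc_def fun_eq_iff)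
  then show ?thesis using h(2) by (simp add: invS_def)
qed

lemma invE_cong: "(\<And>j k. j < m \<Longrightarrow> k < 2*N \<Longrightarrow> M j k = M' j k) \<Longrightarrow> c \<le> N \<Longrightarrow> N \<le> m \<Longrightarrow> invE m c M \<Longrightarrow> invE m c M'"
proof -
  assume h: "\<And>j k. j < m \<Longrightarrow> k < 2*N \<Longrightarrow> M j k = M' j k" "c \<le> N" "N \<le> m" "invE m c M"
  have a: "M j k = M' j k" if "j < m" "k < c" for j k using h(1)[of j k] that h(2) by simp
  have b: "M j k = M' j k" if "j < c" "k < c" for j k using a[of j k] that h(2,3) by simp
  show ?thesis using h(4) unfolding invE_def
  proof (intro conjI allI impI)
    fix j assume "(\<forall>j<c. M j j \<noteq> 0 \<and> (\<forall>k<c. k \<noteq> j \<longrightarrow> M j k = 0)) \<and> (\<forall>j. c \<le> j \<and> j < m \<longrightarrow> (\<forall>k<c. M j k = 0))" "j < c"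
    then show "M' j j \<noteq> 0" using b[of j j] by auto
  next
    fix j k assume "(\<forall>j<c. M j j \<noteq> 0 \<and> (\<forall>k<c. k \<noteq> j \<longrightarrow> M j k = 0)) \<and> (\<forall>j. c \<le> j \<and> j < m \<longrightarrow> (\<forall>k<c. M j k = 0))" "j < c" "k < c" "k \<noteq> j"
    then show "M' j k = 0" using b[of j k] by auto
  next
    fix j k assume "(\<forall>j<c. M j j \<noteq> 0 \<and> (\<forall>k<c. k \<noteq> j \<longrightarrow> M j k = 0)) \<and> (\<forall>j. c \<le> j \<and> j < m \<longrightarrow> (\<forall>k<c. M j k = 0))" "c \<le> j \<and> j < m" "k < c"
    then show "M' j k = 0" using a[of j k] by auto
  qed
qed

definition wp :: "com \<Rightarrow> state \<Rightarrow> (nat \<Rightarrow> state \<Rightarrow> bool) \<Rightarrow> bool" where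
  "wp c s Q \<longleftrightarrow> (\<exists>t s'. exec c s t s' \<and> Q t s')"

inductive_cases SkipE: "exec Skip s t s'"
inductive_cases IStoreE: "exec (IStore a e) s t s'"
inductive_cases RStoreE: "exec (RStore a e) s t s'"
inductive_cases SeqE: "exec (Seq c1 c2) s t s'"
inductive_cases IfE: "exec (If b c1 c2) s t s'"

lemma wp_Skip[simp]: "wp Skip s Q \<longleftrightarrow> Q 1 s"
  unfolding wp_def by (metis SkipE exec_Skip)

lemma wp_IStore[simp]: "wp (IStore a e) s Q \<longleftrightarrow> Q 1 ((fst s)(nat (ieval a s) := ieval e s), snd s)"
  unfolding wp_def by (metis IStoreE exec_IStore)

lemma wp_RStore[simp]: "wp (RStore a e) s Q \<longleftrightarrow> Q 1 (fst s, (snd s)(nat (ieval a s) := reval e s))"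
  unfolding wp_def by (metis RStoreE exec_RStore)

lemma wp_Seq[simp]: "wp (Seq c1 c2) s Q \<longleftrightarrow> wp c1 s (\<lambda>t1 s1. wp c2 s1 (\<lambda>t2 s2. Q (t1 + t2) s2))"
  unfolding wp_def by (metis SeqE exec_Seq)

lemma wp_If[simp]: "wp (If b c1 c2) s Q \<longleftrightarrow>
   (if beval b s then wp c1 s (\<lambda>t. Q (Suc t)) else wp c2 s (\<lambda>t. Q (Suc t)))"
  unfolding wp_def by (metis IfE exec_IfT exec_IfF)

lemma wp_mono: "wp c s Q \<Longrightarrow> (\<And>t s'. Q t s' \<Longrightarrow> Q' t s') \<Longrightarrow> wp c s Q'"
  unfolding wp_def by blast

lemma wp_seqI: "wp c1 s Q1 \<Longrightarrow> (\<And>t1 s1. Q1 t1 s1 \<Longrightarrow> wp c2 s1 (\<lambda>t2 s2. Q (t1 + t2) s2)) \<Longrightarrow>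
   wp (Seq c1 c2) s Q"
  unfolding wp_def by (meson exec_Seq)

lemma wp_while:
  assumes step: "\<And>j s. I (Suc j) s \<Longrightarrow> beval b s \<and> wp c s (\<lambda>t s'. t \<le> T \<and> I j s')"
    and stop: "\<And>s. I 0 s \<Longrightarrow> \<not> beval b s"
  shows "I j s \<Longrightarrow> wp (While b c) s (\<lambda>t s'. t \<le> (T + 1) * j + 1 \<and> I 0 s')"
proof (induction j arbitrary: s)
  case 0
  then have "exec (While b c) s 1 s" using stop by (intro exec_WhileF)
  then show ?case using 0 unfolding wp_def by (intro exI[of _ 1] exI[of _ s]) simp
next
  case (Suc j)
  from step[OF Suc.prems] obtain t1 s1 where b: "beval b s" and e1: "exec c s t1 s1" "t1 \<le> T" "I j s1"
    by (auto simp: wp_def)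
  from Suc.IH[OF e1(3)] obtain t2 s2 where e2: "exec (While b c) s1 t2 s2" "t2 \<le> (T + 1) * j + 1" "I 0 s2"
    by (auto simp: wp_def)
  have "exec (While b c) s (Suc (t1 + t2)) s2" using b e1 e2 by (intro exec_WhileT)
  moreover have "Suc (t1 + t2) \<le> (T + 1) * Suc j + 1" using e1(2) e2(2) by simp
  ultimately show ?case using e2(3) unfolding wp_def by (intro exI[of _ "Suc (t1 + t2)"] exI[of _ s2]) simp
qed

lemma wp_for:
  assumes step: "\<And>i s. lo \<le> i \<Longrightarrow> i < hi \<Longrightarrow> P i s \<Longrightarrow> beval b s \<and> wp c s (\<lambda>t s'. t \<le> T \<and> P (Suc i) s')"
    and stop: "\<And>s. P hi s \<Longrightarrow> \<not> beval b s"
    and start: "P lo s" and le: "lo \<le> hi"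
  shows "wp (While b c) s (\<lambda>t s'. t \<le> (T + 1) * (hi - lo) + 1 \<and> P hi s')"
proof -
  define I where "I = (\<lambda>j s. j \<le> hi - lo \<and> P (hi - j) s)"
  have "wp (While b c) s (\<lambda>t s'. t \<le> (T + 1) * (hi - lo) + 1 \<and> I 0 s')"
  proof (rule wp_while)
    fix j s assume "I (Suc j) s"
    then have h: "Suc j \<le> hi - lo" "P (hi - Suc j) s" by (auto simp: I_def)
    have eq: "Suc (hi - Suc j) = hi - j" using h(1) by simp
    from step[of "hi - Suc j" s] h show "beval b s \<and> wp c s (\<lambda>t s'. t \<le> T \<and> I j s')"
      unfolding eq I_def by (auto elim: wp_mono)
  next
    fix s assume "I 0 s" then show "\<not> beval b s" using stop by (auto simp: I_def)
  next
    show "I (hi - lo) s" using start le by (auto simp: I_def)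
  qed
  then show ?thesis by (rule wp_mono) (auto simp: I_def)
qed

definition "nE = ILoad (IConst 0)"
definition "mE = ILoad (IConst 1)"
definition "CA v = IAdd mE (IConst (int v + 2))"
definition "CE v = ILoad (CA v)"
definition "setC v e = IStore (CA v) e"
definition "incC v = setC v (IAdd (CE v) (IConst 1))"
definition "lt a b = ILe (IAdd a (IConst 1)) b"
definition "N3 = IMul (IConst 3) nE"
definition "N6 = IMul (IConst 6) nE"
definition "WA j k = IAdd (IMul N6 mE) (IAdd (IMul N6 j) k)"
definition "XA i k = IAdd (IMul N3 i) k"
definition "YA i k = IAdd (IMul N3 mE) (IAdd (IMul N3 i) k)"
definition "SA (t::nat) = IAdd (IMul (IConst 12) (IMul nE mE)) (IConst (int t))"
definition "RA k = IAdd (IMul (IConst 12) (IMul nE mE)) (IAdd (IConst 8) k)"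
definition "LB e = ILoad (IAdd e (IConst 2))"
definition "forC v lo hi body = Seq (setC v lo) (While (lt (CE v) hi) (Seq body (incC v)))"

locale L =
  fixes n m :: nat and x y :: "nat \<Rightarrow> nat \<Rightarrow> real" and z :: "nat \<Rightarrow> bool"
  assumes n1: "1 \<le> n" and mn: "3 * n \<le> m"
begin

definition ints :: "(nat \<Rightarrow> int) \<Rightarrow> nat \<Rightarrow> int" where
  "ints cnt a = (if a = 0 then int n else if a = 1 then int m
          else if 2 \<le> a \<and> a < m + 2 then (if z (a - 2) then 1 else 0) else cnt (a - (m + 2)))"

definition base :: "(nat \<Rightarrow> nat \<Rightarrow> real) \<Rightarrow> nat \<Rightarrow> real" where
  "base M a = (if a < 3*(n*m) then x (a div (3*n)) (a mod (3*n))
          else if a < 6*(n*m) then y ((a - 3*(n*m)) div (3*n)) ((a - 3*(n*m)) mod (3*n))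
          else M ((a - 6*(n*m)) div (6*n)) ((a - 6*(n*m)) mod (6*n)))"

definition mem :: "(nat \<Rightarrow> nat \<Rightarrow> real) \<Rightarrow> (nat \<Rightarrow> real) \<Rightarrow> (nat \<Rightarrow> real) \<Rightarrow> nat \<Rightarrow> real" where
  "mem M sc R = (\<lambda>a. if a < 12*(n*m) then base M a
          else if a < 12*(n*m) + 8 then sc (a - 12*(n*m)) else R (a - (12*(n*m) + 8)))"

definition "wad j k = 6*(n*m) + 6*n*j + k"
definition "xad i k = 3*n*i + k"
definition "yad i k = 3*(n*m) + 3*n*i + k"
definition "sad t = 12*(n*m) + t"
definition "rad k = 12*(n*m) + 8 + k"
definition "cad v = m + 2 + v"

lemma npos: "0 < n" using n1 by simp
lemma mpos: "0 < m" using n1 mn by simp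
lemma nm: "n < m" using n1 mn by simp

lemma ints_0[simp]: "ints cnt 0 = int n" and ints_1[simp]: "ints cnt (Suc 0) = int m"
  by (auto simp: ints_def)

lemma ints_cad[simp]: "ints cnt (cad v) = cnt v"
  by (auto simp: ints_def cad_def)

lemma ints_upd[simp]: "(ints cnt)(cad v := w) = ints (cnt(v := w))"
  by (rule ext) (auto simp: ints_def cad_def)

lemma ieval_nE[simp]: "ieval nE (ints cnt, mm) = int n" by (simp add: nE_def)
lemma ieval_mE[simp]: "ieval mE (ints cnt, mm) = int m" by (simp add: mE_def)

lemma ieval_CA[simp]: "ieval (CA v) (ints cnt, mm) = int (cad v)"
  by (simp add: CA_def cad_def)
lemma ieval_CE[simp]: "ieval (CE v) (ints cnt, mm) = cnt v"
  by (simp add: CE_def)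
lemma ieval_LB[simp]: "ieval e (ints cnt, mm) = int i \<Longrightarrow> i < m \<Longrightarrow>
    ieval (LB e) (ints cnt, mm) = (if z i then 1 else 0)"
proof -
  assume a: "ieval e (ints cnt, mm) = int i" "i < m"
  have h: "nat (int i + 2) = i + 2" by (simp add: nat_add_distrib)
  show ?thesis using a by (simp add: LB_def ints_def h)
qed

lemma ieval_WA[simp]: "0 \<le> ieval j (ints cnt, mm) \<Longrightarrow> 0 \<le> ieval k (ints cnt, mm) \<Longrightarrow>
   ieval (WA j k) (ints cnt, mm) = int (wad (nat (ieval j (ints cnt, mm))) (nat (ieval k (ints cnt, mm))))"
  by (simp add: WA_def wad_def N6_def)
lemma ieval_XA[simp]: "0 \<le> ieval j (ints cnt, mm) \<Longrightarrow> 0 \<le> ieval k (ints cnt, mm) \<Longrightarrow>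
   ieval (XA j k) (ints cnt, mm) = int (xad (nat (ieval j (ints cnt, mm))) (nat (ieval k (ints cnt, mm))))"
  by (simp add: XA_def xad_def N3_def)
lemma ieval_YA[simp]: "0 \<le> ieval j (ints cnt, mm) \<Longrightarrow> 0 \<le> ieval k (ints cnt, mm) \<Longrightarrow>
   ieval (YA j k) (ints cnt, mm) = int (yad (nat (ieval j (ints cnt, mm))) (nat (ieval k (ints cnt, mm))))"
  by (simp add: YA_def yad_def N3_def)
lemma ieval_SA[simp]: "ieval (SA t) (ints cnt, mm) = int (sad t)"
  by (simp add: SA_def sad_def)
lemma ieval_RA[simp]: "0 \<le> ieval k (ints cnt, mm) \<Longrightarrow>
   ieval (RA k) (ints cnt, mm) = int (rad (nat (ieval k (ints cnt, mm))))"
  by (simp add: RA_def rad_def)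
lemma ieval_N3[simp]: "ieval N3 (ints cnt, mm) = int (3*n)" by (simp add: N3_def)
lemma ieval_N6[simp]: "ieval N6 (ints cnt, mm) = int (6*n)" by (simp add: N6_def)

lemma divmod_aux: "k < (d::nat) \<Longrightarrow> (d * j + k) div d = j \<and> (d * j + k) mod d = k"
proof -
  assume a: "k < d"
  have e: "d * j + k = k + j * d" by simp
  show ?thesis unfolding e using a by (simp add: div_mult_self1 mod_mult_self1)
qed

lemma wad_lt: "j < m \<Longrightarrow> k < 6*n \<Longrightarrow> 6*n*j + k < 6*(n*m)"
proof -
  assume a: "j < m" "k < 6*n"
  have "6*n*j + k < 6*n*j + 6*n" using a by simp
  also have "\<dots> = 6*n*(Suc j)" by simp
  also have "\<dots> \<le> 6*n*m" using a by (intro mult_le_mono2) simp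
  also have "\<dots> = 6*(n*m)" by simp
  finally show ?thesis .
qed

lemma mem_wad[simp]: assumes "j < m" "k < 6*n" shows "mem M sc R (wad j k) = M j k"
proof -
  have l: "6*n*j + k < 6*(n*m)" using wad_lt assms by blast
  have a1: "\<not> wad j k < 3*(n*m)" "\<not> wad j k < 6*(n*m)" "wad j k < 12*(n*m)"
    unfolding wad_def using l by linarith+
  have a2: "wad j k - 6*(n*m) = 6*n*j + k" by (simp add: wad_def)
  have d: "(6*n*j + k) div (6*n) = j" "(6*n*j + k) mod (6*n) = k" using divmod_aux[OF assms(2)] by auto
  show ?thesis by (simp add: mem_def base_def a1 a2 d assms)
qed

lemma mem_xad[simp]: assumes "j < m" "k < 3*n" shows "mem M sc R (xad j k) = x j k"
proof -
  have "3*n*j + k < 3*n*j + 3*n" using assms by simp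
  also have "\<dots> = 3*n*(Suc j)" by simp
  also have "\<dots> \<le> 3*n*m" using assms by (intro mult_le_mono2) simp
  also have "\<dots> = 3*(n*m)" by simp
  finally have l: "xad j k < 3*(n*m)" by (simp add: xad_def)
  have d: "(3*n*j + k) div (3*n) = j" "(3*n*j + k) mod (3*n) = k" using divmod_aux[OF assms(2)] by auto
  have l2: "xad j k < 12*(n*m)" using l by simp
  show ?thesis using l l2 by (simp add: mem_def base_def d assms xad_def)
qed

lemma mem_yad[simp]: assumes "j < m" "k < 3*n" shows "mem M sc R (yad j k) = y j k"
proof -
  have "3*n*j + k < 3*n*j + 3*n" using assms by simp
  also have "\<dots> = 3*n*(Suc j)" by simp
  also have "\<dots> \<le> 3*n*m" using assms by (intro mult_le_mono2) simp
  also have "\<dots> = 3*(n*m)" by simp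
  finally have l: "3*n*j + k < 3*(n*m)" .
  have l1: "\<not> yad j k < 3*(n*m)" "yad j k < 6*(n*m)" "yad j k < 12*(n*m)" "yad j k - 3*(n*m) = 3*n*j + k"
    using l unfolding yad_def by (simp_all add: mult.commute[of m n])
  have d: "(3*n*j + k) div (3*n) = j" "(3*n*j + k) mod (3*n) = k" using divmod_aux[OF assms(2)] by auto
  show ?thesis by (simp add: mem_def base_def l1 d assms)
qed

lemma mem_sad[simp]: assumes "t < 8" shows "mem M sc R (sad t) = sc t"
proof -
  have a1: "\<not> sad t < 3*(n*m)" "\<not> sad t < 6*(n*m)" "\<not> sad t < 12*(n*m)" "sad t < 12*(n*m) + 8"
    "sad t - 12*(n*m) = t"
    unfolding sad_def using assms by simp_all
  show ?thesis by (simp add: mem_def a1)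
qed

lemma mem_rad[simp]: "mem M sc R (rad k) = R k"
proof -
  have a1: "\<not> rad k < 3*(n*m)" "\<not> rad k < 6*(n*m)" "\<not> rad k < 12*(n*m)" "\<not> rad k < 12*(n*m) + 8"
    "rad k - (12*(n*m) + 8) = k"
    unfolding rad_def by simp_all
  show ?thesis unfolding mem_def by (simp only: a1 if_False)
qed

lemma wad_inj: assumes "k < 6*n" "k' < 6*n"
  shows "wad j k = wad j' k' \<longleftrightarrow> j = j' \<and> k = k'"
proof
  assume "wad j k = wad j' k'"
  then have e: "6*n*j + k = 6*n*j' + k'" by (simp add: wad_def)
  show "j = j' \<and> k = k'"
    using divmod_aux[OF assms(1), of j] divmod_aux[OF assms(2), of j'] unfolding e by simp
qed simp

lemma mem_upd_wad[simp]: assumes a: "j < m" "k < 6*n"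
  shows "(mem M sc R)(wad j k := w) = mem (M(j := (M j)(k := w))) sc R"
proof (rule ext)
  fix a
  show "((mem M sc R)(wad j k := w)) a = mem (M(j := (M j)(k := w))) sc R a"
  proof (cases "6*(n*m) \<le> a \<and> a < 12*(n*m)")
    case True
    define j' where "j' = (a - 6*(n*m)) div (6*n)"
    define k' where "k' = (a - 6*(n*m)) mod (6*n)"
    have k': "k' < 6*n" using npos by (simp add: k'_def)
    have aeq: "a = wad j' k'" using True by (simp add: wad_def j'_def k'_def)
    have "m * (6*n) = 6*(n*m)" by simp
    then have "a - 6*(n*m) < m * (6*n)" using True by linarith
    then have j': "j' < m" unfolding j'_def by (rule less_mult_imp_div_less)
    show ?thesis using a j' k' wad_inj[of k k' j j'] unfolding aeq by auto
  next
    case False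
    then have ne: "a \<noteq> wad j k" using wad_lt[OF a] unfolding wad_def by auto
    have "a < 12*(n*m) \<Longrightarrow> base M a = base (M(j := (M j)(k := w))) a" using False unfolding base_def by auto
    then show ?thesis using ne by (simp add: mem_def)
  qed
qed

lemma mem_upd_sad[simp]: "t < 8 \<Longrightarrow> (mem M sc R)(sad t := w) = mem M (sc(t := w)) R"
  by (auto simp: mem_def sad_def fun_eq_iff)

lemma mem_upd_rad[simp]: "(mem M sc R)(rad k := w) = mem M sc (R(k := w))"
  by (auto simp: mem_def rad_def fun_eq_iff)

lemma mem_cong: "(\<And>j k. j < m \<Longrightarrow> k < 6*n \<Longrightarrow> M j k = M' j k) \<Longrightarrow> (\<And>t. t < 8 \<Longrightarrow> sc t = sc' t) \<Longrightarrow> R = R' \<Longrightarrow>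
   mem M sc R = mem M' sc' R'"
proof (rule ext)
  fix a assume h: "\<And>j k. j < m \<Longrightarrow> k < 6*n \<Longrightarrow> M j k = M' j k" "\<And>t. t < 8 \<Longrightarrow> sc t = sc' t" "R = R'"
  have "a < 12*(n*m) \<Longrightarrow> base M a = base M' a"
  proof (cases "6*(n*m) \<le> a \<and> a < 12*(n*m)")
    case True
    have "m * (6*n) = 6*(n*m)" by simp
    then have "a - 6*(n*m) < m * (6*n)" using True by linarith
    then have "(a - 6*(n*m)) div (6*n) < m" by (rule less_mult_imp_div_less)
    then show "a < 12*(n*m) \<Longrightarrow> ?thesis" using True npos h unfolding base_def by auto
  next
    case False then show "a < 12*(n*m) \<Longrightarrow> ?thesis" unfolding base_def by auto
  qed
  then show "mem M sc R a = mem M' sc' R' a" using h by (auto simp: mem_def)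
qed

definition wf :: "state \<Rightarrow> bool" where
  "wf s \<longleftrightarrow> (\<exists>cnt M sc R. s = (ints cnt, mem M sc R))"
definition "Cn s v = fst s (cad v)"
definition "Mm s j k = snd s (wad j k)"
definition "Sc s t = snd s (sad t)"
definition "Rr s k = snd s (rad k)"

lemma wf_simp[simp]: "wf (ints cnt, mem M sc R)" by (auto simp: wf_def)
lemma Cn_simp[simp]: "Cn (ints cnt, mm) v = cnt v" by (simp add: Cn_def)
lemma Mm_simp[simp]: "j < m \<Longrightarrow> k < 6*n \<Longrightarrow> Mm (ii, mem M sc R) j k = M j k" by (simp add: Mm_def)
lemma Sc_simp[simp]: "t < 8 \<Longrightarrow> Sc (ii, mem M sc R) t = sc t" by (simp add: Sc_def)
lemma Rr_simp[simp]: "Rr (ii, mem M sc R) k = R k" by (simp add: Rr_def)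
lemma Rr_fun[simp]: "Rr (ii, mem M sc R) = R" by (simp add: Rr_def fun_eq_iff)

lemma wfE: "wf s \<Longrightarrow> (\<And>cnt M sc R. s = (ints cnt, mem M sc R) \<Longrightarrow> thesis) \<Longrightarrow> thesis"
  by (auto simp: wf_def)

lemma nat_int_add2[simp]: "nat (int a + int b) = a + b" by simp
lemma sad_ne_wad[simp]: "j < m \<Longrightarrow> k < 6*n \<Longrightarrow> sad t \<noteq> wad j k"
  using wad_lt[of j k] unfolding sad_def wad_def by linarith
lemma sad_ne_wad'[simp]: "j < m \<Longrightarrow> k < 6*n \<Longrightarrow> wad j k \<noteq> sad t"
  using wad_lt[of j k] unfolding sad_def wad_def by linarith
lemma rad_ne_wad[simp]: "j < m \<Longrightarrow> k < 6*n \<Longrightarrow> rad t \<noteq> wad j k"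
  using wad_lt[of j k] unfolding rad_def wad_def by linarith
lemma rad_ne_wad'[simp]: "j < m \<Longrightarrow> k < 6*n \<Longrightarrow> wad j k \<noteq> rad t"
  using wad_lt[of j k] unfolding rad_def wad_def by linarith
lemma rad_ne_sad[simp]: "t < 8 \<Longrightarrow> rad k \<noteq> sad t \<and> sad t \<noteq> rad k"
  by (auto simp: rad_def sad_def)
lemma sad_ne_sad[simp]: "sad t = sad t' \<longleftrightarrow> t = t'"
  by (auto simp: sad_def)
lemma rad_ne_rad[simp]: "rad t = rad t' \<longleftrightarrow> t = t'"
  by (auto simp: rad_def)
lemma nat_int_lin[simp]: "nat (numeral c * int a + int b) = numeral c * a + b" by (simp add: nat_add_distrib nat_mult_distrib)
lemma nat_int_lin2[simp]: "nat (numeral c * int a + (numeral d * int b + int e)) = numeral c * a + (numeral d * b + e)" by (simp add: nat_add_distrib nat_mult_distrib)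
lemma nat_int_lin0[simp]: "nat (numeral c * int a) = numeral c * a" by (simp add: nat_mult_distrib)
lemma nat_int_lin1[simp]: "nat (numeral c * int a + 1) = numeral c * a + 1" by (simp add: nat_add_distrib nat_mult_distrib)
lemma rad_not_less[simp]: "\<not> rad k < k" by (simp add: rad_def)
lemma sad_big[simp]: "\<not> sad t < 6*n" "sad t \<noteq> 6*n" "sad t \<noteq> 6*n + 1"
proof -
  have "6*n \<le> 6*(n*m)" using mpos by simp
  then show "\<not> sad t < 6*n" "sad t \<noteq> 6*n" "sad t \<noteq> 6*n + 1" unfolding sad_def using npos by linarith+
qed
lemma nat_int_add1[simp]: "nat (int a + 1) = a + 1" by simp

end

lemma wp_forC:
  assumes init: "P lo ((fst s)(nat (ieval (CA v) s) := ieval loE s), snd s)"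
    and step: "\<And>i s. lo \<le> i \<Longrightarrow> i < hi \<Longrightarrow> P i s \<Longrightarrow>
       beval (lt (CE v) hiE) s \<and> wp (Seq body (incC v)) s (\<lambda>t s'. t \<le> T \<and> P (Suc i) s')"
    and stop: "\<And>s. P hi s \<Longrightarrow> \<not> beval (lt (CE v) hiE) s"
    and le: "lo \<le> hi"
    and bd: "(T + 1) * (hi - lo) + 2 \<le> B"
  shows "wp (forC v loE hiE body) s (\<lambda>t s'. t \<le> B \<and> P hi s')"
proof -
  have "wp (While (lt (CE v) hiE) (Seq body (incC v))) ((fst s)(nat (ieval (CA v) s) := ieval loE s), snd s)
     (\<lambda>t s'. t \<le> (T + 1) * (hi - lo) + 1 \<and> P hi s')"
    by (rule wp_for[OF step stop init le])
  then show ?thesis unfolding forC_def setC_def using bd by (simp add: wp_IStore) (erule wp_mono; simp)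
qed

definition "COPY_in = forC 2 (IConst 0) N3 (Seq (RStore (WA (CE 1) (CE 2)) (RLoad (XA (CE 1) (CE 2))))
   (RStore (WA (CE 1) (IAdd N3 (CE 2))) (RLoad (YA (CE 1) (CE 2)))))"
definition "COPY = forC 1 (IConst 0) mE COPY_in"

definition "SEARCH = Seq (setC 1 (CE 0)) (While (BAnd (lt (CE 1) mE)
    (BAnd (RLe (RLoad (WA (CE 1) (CE 0))) (RConst 0)) (RLe (RConst 0) (RLoad (WA (CE 1) (CE 0)))))) (incC 1))"
definition "SWAP = forC 2 (IConst 0) N6 (Seq (RStore (SA 0) (RLoad (WA (CE 0) (CE 2))))
    (Seq (RStore (WA (CE 0) (CE 2)) (RLoad (WA (CE 1) (CE 2)))) (RStore (WA (CE 1) (CE 2)) (RLoad (SA 0)))))"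
definition "ELIMROW = Seq (RStore (SA 1) (RDiv (RLoad (WA (CE 1) (CE 0))) (RLoad (WA (CE 0) (CE 0)))))
   (forC 2 (IConst 0) N6 (RStore (WA (CE 1) (CE 2))
      (RSub (RLoad (WA (CE 1) (CE 2))) (RMul (RLoad (SA 1)) (RLoad (WA (CE 0) (CE 2)))))))"
definition "ELIM = forC 1 (IConst 0) mE (If (BNot (BAnd (ILe (CE 1) (CE 0)) (ILe (CE 0) (CE 1)))) ELIMROW Skip)"

definition "GJLOOP = forC 0 (IConst 0) N3 (Seq SEARCH (Seq SWAP ELIM))"

definition "sqrt2 = RSqrt (RConst 2)"
definition "RCOMP = forC 2 (IConst 0) nE (Seq
   (RStore (RA (CE 2)) (RDiv (RMul sqrt2 (RLoad (WA nE (IAdd (IMul (IConst 4) nE) (CE 2))))) (RLoad (WA nE nE))))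
   (RStore (RA (IAdd N3 (CE 2))) (RDiv (RMul sqrt2 (RLoad (WA nE (IAdd (IMul (IConst 5) nE) (CE 2))))) (RLoad (WA nE nE)))))"
definition "DOT = Seq (RStore (SA 2) (RConst 0)) (Seq (RStore (SA 3) (RConst 0)) (forC 2 (IConst 0) N3
   (Seq (RStore (SA 2) (RAdd (RLoad (SA 2)) (RMul (RLoad (RA (CE 2))) (RLoad (XA (CE 1) (CE 2))))))
        (RStore (SA 3) (RAdd (RLoad (SA 3)) (RMul (RLoad (RA (IAdd N3 (CE 2)))) (RLoad (XA (CE 1) (CE 2)))))))))"
definition "BPASS = Seq (RStore (SA 4) (RConst 1)) (forC 1 (IConst 0) mE (Seq DOT
   (RStore (SA 4) (RAdd (RAdd (RLoad (SA 4)) (RSqrt (RMul (RLoad (SA 2)) (RLoad (SA 2)))))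
      (RSqrt (RMul (RLoad (SA 3)) (RLoad (SA 3))))))))"
definition "CPASS = Seq (RStore (SA 5) (RSub (RConst 0) (RLoad (SA 4)))) (Seq (RStore (SA 6) (RSub (RConst 0) (RLoad (SA 4))))
   (forC 1 (IConst 0) mE (Seq DOT (If (ILe (IConst 1) (LB (CE 1)))
      (Seq (If (RLe (RLoad (SA 5)) (RLoad (SA 2))) (RStore (SA 5) (RLoad (SA 2))) Skip)
           (If (RLe (RLoad (SA 6)) (RLoad (SA 3))) (RStore (SA 6) (RLoad (SA 3))) Skip)) Skip))))"
definition "OUT = Seq (forC 2 (IConst 0) N6 (RStore (CE 2) (RLoad (RA (CE 2)))))
   (Seq (RStore N6 (RLoad (SA 5))) (RStore (IAdd N6 (IConst 1)) (RLoad (SA 6))))"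

context L begin

definition "M0 j k = (if k < 3*n then x j k else y j (k - 3*n))"

definition "Pcin i kk s \<longleftrightarrow> wf s \<and> Cn s 1 = int i \<and> Cn s 2 = int kk \<and> kk \<le> 3*n \<and>
   (\<forall>j<m. \<forall>k<6*n. Mm s j k = (if j < i \<or> (j = i \<and> (k < kk \<or> (3*n \<le> k \<and> k < 3*n + kk))) then M0 j k else 0)) \<and>
   Rr s = (\<lambda>_. 0)"

definition "Pcout i s \<longleftrightarrow> wf s \<and> Cn s 1 = int i \<and>
   (\<forall>j<m. \<forall>k<6*n. Mm s j k = (if j < i then M0 j k else 0)) \<and> Rr s = (\<lambda>_. 0)"

lemma copy_in:
  assumes "Pcout i s" "i < m"
  shows "wp COPY_in s (\<lambda>t s'. t \<le> 12*n + 2 \<and> Pcin i (3*n) s')"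
proof -
  from assms obtain cnt M sc R where s: "s = (ints cnt, mem M sc R)" unfolding Pcout_def by (auto elim: wfE)
  have "wp COPY_in s (\<lambda>t s'. t \<le> 12*n + 2 \<and> Pcin i (3*n) s')"
    unfolding COPY_in_def
  proof (rule wp_forC)
    show "Pcin i 0 ((fst s)(nat (ieval (CA 2) s) := ieval (IConst 0) s), snd s)"
      using assms unfolding s Pcout_def Pcin_def by simp
  next
    fix kk s assume a: "0 \<le> kk" "kk < 3*n" "Pcin i kk s"
    from a obtain cnt M sc R where s: "s = (ints cnt, mem M sc R)" unfolding Pcin_def by (auto elim: wfE)
    show "beval (lt (CE 2) N3) s \<and> wp (Seq (Seq (RStore (WA (CE 1) (CE 2)) (RLoad (XA (CE 1) (CE 2))))
       (RStore (WA (CE 1) (IAdd N3 (CE 2))) (RLoad (YA (CE 1) (CE 2))))) (incC 2)) s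
       (\<lambda>t s'. t \<le> 3 \<and> Pcin i (Suc kk) s')"
      using a assms(2) unfolding s Pcin_def
      by (auto simp: lt_def incC_def setC_def M0_def)
  next
    fix s assume "Pcin i (3*n) s"
    then show "\<not> beval (lt (CE 2) N3) s" unfolding Pcin_def by (auto elim!: wfE simp: lt_def)
  qed simp_all
  then show ?thesis .
qed

lemma copy:
  assumes "Pcout 0 s"
  shows "wp COPY s (\<lambda>t s'. t \<le> (12*n + 4) * m + 2 \<and> Pcout m s')"
  unfolding COPY_def
proof (rule wp_forC[where P = Pcout and lo = 0 and hi = m])
  show "Pcout 0 ((fst s)(nat (ieval (CA 1) s) := ieval (IConst 0) s), snd s)"
    using assms unfolding Pcout_def by (auto elim!: wfE)
next
  fix i s assume a: "0 \<le> i" "i < m" "Pcout i s"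
  show "beval (lt (CE 1) mE) s \<and> wp (Seq COPY_in (incC 1)) s (\<lambda>t s'. t \<le> 12*n+3 \<and> Pcout (Suc i) s')"
  proof
    show "beval (lt (CE 1) mE) s" using a unfolding Pcout_def by (auto elim!: wfE simp: lt_def)
    show "wp (Seq COPY_in (incC 1)) s (\<lambda>t s'. t \<le> 12*n+3 \<and> Pcout (Suc i) s')"
    proof (rule wp_seqI[OF copy_in[OF a(3) a(2)]])
      fix t1 s1 assume b: "t1 \<le> 12*n + 2 \<and> Pcin i (3*n) s1"
      then obtain cnt M sc R where s1: "s1 = (ints cnt, mem M sc R)" unfolding Pcin_def by (auto elim: wfE)
      show "wp (incC 1) s1 (\<lambda>t2 s2. t1 + t2 \<le> 12*n+3 \<and> Pcout (Suc i) s2)"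
        using b unfolding s1 Pcin_def Pcout_def by (auto simp: incC_def setC_def less_Suc_eq)
    qed
  qed
next
  fix s assume "Pcout m s"
  then show "\<not> beval (lt (CE 1) mE) s" unfolding Pcout_def by (auto elim!: wfE simp: lt_def)
qed simp_all

lemma search:
  assumes s: "wf s" "Cn s 0 = int c" and p: "c \<le> p" "p < m" "Mm s p c \<noteq> 0"
    and z: "\<And>i. c \<le> i \<Longrightarrow> i < p \<Longrightarrow> Mm s i c = 0" and cm: "c < 6*n"
  shows "wp SEARCH s (\<lambda>t s'. t \<le> 2*m + 2 \<and> wf s' \<and> Cn s' 0 = int c \<and> Cn s' 1 = int p \<and> snd s' = snd s)"
proof -
  from s obtain cnt M sc R where s0: "s = (ints cnt, mem M sc R)" by (auto elim: wfE)
  define P where "P = (\<lambda>i s'. wf s' \<and> Cn s' 0 = int c \<and> Cn s' 1 = int i \<and> snd s' = snd s)"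
  have "wp (While (BAnd (lt (CE 1) mE)
    (BAnd (RLe (RLoad (WA (CE 1) (CE 0))) (RConst 0)) (RLe (RConst 0) (RLoad (WA (CE 1) (CE 0)))))) (incC 1))
     ((fst s)(nat (ieval (CA 1) s) := ieval (CE 0) s), snd s) (\<lambda>t s'. t \<le> (1 + 1) * (p - c) + 1 \<and> P p s')"
  proof (rule wp_for)
    fix i s' assume a: "c \<le> i" "i < p" "P i s'"
    then obtain cnt' where s': "s' = (ints cnt', mem M sc R)" "cnt' 0 = int c" "cnt' 1 = int i"
      unfolding P_def s0 by (auto elim!: wfE)
    have "M i c = 0" using z[OF a(1,2)] s0 a p cm by simp
    then show "beval (BAnd (lt (CE 1) mE)
    (BAnd (RLe (RLoad (WA (CE 1) (CE 0))) (RConst 0)) (RLe (RConst 0) (RLoad (WA (CE 1) (CE 0)))))) s' \<and>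
      wp (incC 1) s' (\<lambda>t s''. t \<le> 1 \<and> P (Suc i) s'')"
      using a p cm s'(2,3) unfolding s'(1) P_def s0 by (auto simp: lt_def incC_def setC_def)
  next
    fix s' assume "P p s'"
    then obtain cnt' where s': "s' = (ints cnt', mem M sc R)" "cnt' 0 = int c" "cnt' 1 = int p"
      unfolding P_def s0 by (auto elim!: wfE)
    have "M p c \<noteq> 0" using p s0 cm by simp
    then show "\<not> beval (BAnd (lt (CE 1) mE)
    (BAnd (RLe (RLoad (WA (CE 1) (CE 0))) (RConst 0)) (RLe (RConst 0) (RLoad (WA (CE 1) (CE 0)))))) s'"
      using p cm s'(2,3) unfolding s'(1) by (auto simp: lt_def)
  next
    show "P c ((fst s)(nat (ieval (CA 1) s) := ieval (CE 0) s), snd s)"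
      using s unfolding P_def s0 by simp
  qed (use p in simp)
  then show ?thesis unfolding SEARCH_def setC_def P_def
    by simp (erule wp_mono; use p in auto)
qed

lemma swap:
  assumes s: "wf s" "Cn s 0 = int c" "Cn s 1 = int p" and cp: "c < m" "p < m"
  shows "wp SWAP s (\<lambda>t s'. t \<le> 30*n + 2 \<and> wf s' \<and> Cn s' 0 = int c \<and> Cn s' 1 = int p \<and>
     (\<forall>j<m. \<forall>k<6*n. Mm s' j k = mswap (Mm s) c p j k) \<and> Rr s' = Rr s)"
proof -
  from s obtain cnt M sc R where s0: "s = (ints cnt, mem M sc R)" by (auto elim: wfE)
  define P where "P = (\<lambda>kk s'. wf s' \<and> Cn s' 0 = int c \<and> Cn s' 1 = int p \<and> Cn s' 2 = int kk \<and>
     (\<forall>j<m. \<forall>k<6*n. Mm s' j k = (if k < kk then mswap M c p j k else M j k)) \<and> Rr s' = R)"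
  have "wp SWAP s (\<lambda>t s'. t \<le> 30*n + 2 \<and> P (6*n) s')"
    unfolding SWAP_def
  proof (rule wp_forC[where P = P and lo = 0 and hi = "6*n"])
    show "P 0 ((fst s)(nat (ieval (CA 2) s) := ieval (IConst 0) s), snd s)"
      using s cp unfolding P_def s0 by simp
  next
    fix kk s' assume a: "0 \<le> kk" "kk < 6*n" "P kk s'"
    then obtain cnt' M' sc' where s': "s' = (ints cnt', mem M' sc' R)" "cnt' 0 = int c" "cnt' 1 = int p" "cnt' 2 = int kk"
      "\<forall>j<m. \<forall>k<6*n. M' j k = (if k < kk then mswap M c p j k else M j k)"
      unfolding P_def by (auto elim!: wfE)
    show "beval (lt (CE 2) N6) s' \<and> wp (Seq (Seq (RStore (SA 0) (RLoad (WA (CE 0) (CE 2))))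
         (Seq (RStore (WA (CE 0) (CE 2)) (RLoad (WA (CE 1) (CE 2)))) (RStore (WA (CE 1) (CE 2)) (RLoad (SA 0))))) (incC 2)) s'
       (\<lambda>t s''. t \<le> 4 \<and> P (Suc kk) s'')"
      using a cp s'(2-5) unfolding s'(1) P_def
      by (auto simp: lt_def incC_def setC_def mswap_def less_Suc_eq)
  next
    fix s' assume "P (6*n) s'"
    then show "\<not> beval (lt (CE 2) N6) s'" unfolding P_def by (auto elim!: wfE simp: lt_def)
  qed simp_all
  then show ?thesis
    by (rule wp_mono) (use cp in \<open>auto simp: P_def s0 mswap_def\<close>)
qed

lemma elimrow:
  assumes s: "wf s" "Cn s 0 = int c" "Cn s 1 = int i" and ci: "c < m" "i < m" "i \<noteq> c" and c3: "c < 3*n"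
  shows "wp ELIMROW s (\<lambda>t s'. t \<le> 18*n + 3 \<and> wf s' \<and> Cn s' 0 = int c \<and> Cn s' 1 = int i \<and>
     (\<forall>j<m. \<forall>k<6*n. Mm s' j k = (if j = i then Mm s i k - (Mm s i c / Mm s c c) * Mm s c k else Mm s j k)) \<and> Rr s' = Rr s)"
proof -
  from s obtain cnt M sc R where s0: "s = (ints cnt, mem M sc R)" by (auto elim: wfE)
  have c6: "c < 6*n" using c3 by simp
  define f where "f = M i c / M c c"
  define P where "P = (\<lambda>kk s'. wf s' \<and> Cn s' 0 = int c \<and> Cn s' 1 = int i \<and> Cn s' 2 = int kk \<and> Sc s' 1 = f \<and>
     (\<forall>j<m. \<forall>k<6*n. Mm s' j k = (if j = i \<and> k < kk then M i k - f * M c k else M j k)) \<and> Rr s' = R)"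
  let ?s1 = "(fst s, (snd s)(nat (ieval (SA 1) s) := reval (RDiv (RLoad (WA (CE 1) (CE 0))) (RLoad (WA (CE 0) (CE 0)))) s))"
  have "wp (forC 2 (IConst 0) N6 (RStore (WA (CE 1) (CE 2))
      (RSub (RLoad (WA (CE 1) (CE 2))) (RMul (RLoad (SA 1)) (RLoad (WA (CE 0) (CE 2))))))) ?s1
      (\<lambda>t s'. t \<le> 18*n + 2 \<and> P (6*n) s')"
  proof (rule wp_forC[where P = P and lo = 0 and hi = "6*n"])
    show "P 0 ((fst ?s1)(nat (ieval (CA 2) ?s1) := ieval (IConst 0) ?s1), snd ?s1)"
      using s ci c6 unfolding P_def s0 f_def by simp
  next
    fix kk s' assume a: "0 \<le> kk" "kk < 6*n" "P kk s'"
    then obtain cnt' M' sc' where s': "s' = (ints cnt', mem M' sc' R)" "cnt' 0 = int c" "cnt' 1 = int i" "cnt' 2 = int kk"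
      "sc' 1 = f" "\<forall>j<m. \<forall>k<6*n. M' j k = (if j = i \<and> k < kk then M i k - f * M c k else M j k)"
      unfolding P_def by (auto elim!: wfE)
    show "beval (lt (CE 2) N6) s' \<and> wp (Seq (RStore (WA (CE 1) (CE 2))
      (RSub (RLoad (WA (CE 1) (CE 2))) (RMul (RLoad (SA 1)) (RLoad (WA (CE 0) (CE 2)))))) (incC 2)) s'
       (\<lambda>t s''. t \<le> 2 \<and> P (Suc kk) s'')"
      using a ci c6 s'(2-6) unfolding s'(1) P_def
      by (auto simp: lt_def incC_def setC_def less_Suc_eq)
  next
    fix s' assume "P (6*n) s'"
    then show "\<not> beval (lt (CE 2) N6) s'" unfolding P_def by (auto elim!: wfE simp: lt_def)
  qed simp_all
  then show ?thesis unfolding ELIMROW_def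
    by simp (erule wp_mono; use ci c6 in \<open>auto simp: P_def s0 f_def\<close>)
qed

lemma elim:
  assumes s: "wf s" "Cn s 0 = int c" and c3: "c < 3*n"
  shows "wp ELIM s (\<lambda>t s'. t \<le> (18*n + 6) * m + 2 \<and> wf s' \<and> Cn s' 0 = int c \<and>
     (\<forall>j<m. \<forall>k<6*n. Mm s' j k = melim (Mm s) c j k) \<and> Rr s' = Rr s)"
proof -
  define M1 where "M1 = Mm s"
  define P where "P = (\<lambda>i s'. wf s' \<and> Cn s' 0 = int c \<and> Cn s' 1 = int i \<and>
     (\<forall>j<m. \<forall>k<6*n. Mm s' j k = (if j < i then melim M1 c j k else M1 j k)) \<and> Rr s' = Rr s)"
  have c6: "c < 6*n" using c3 by simp
  have c: "c < m" using c3 mn by simp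
  have "wp ELIM s (\<lambda>t s'. t \<le> (18*n + 6) * m + 2 \<and> P m s')"
    unfolding ELIM_def
  proof (rule wp_forC[where P = P and lo = 0 and hi = m])
    show "P 0 ((fst s)(nat (ieval (CA 1) s) := ieval (IConst 0) s), snd s)"
      using s unfolding P_def M1_def by (auto elim!: wfE)
  next
    fix i s' assume a: "0 \<le> i" "i < m" "P i s'"
    have wf': "wf s'" and cn': "Cn s' 0 = int c" "Cn s' 1 = int i" using a unfolding P_def by auto
    from wf' obtain cnt' M' sc' R' where s': "s' = (ints cnt', mem M' sc' R')" by (auto elim: wfE)
    have b: "beval (lt (CE 1) mE) s'" using a cn' unfolding s' by (auto simp: lt_def)
    show "beval (lt (CE 1) mE) s' \<and> wp (Seq (If (BNot (BAnd (ILe (CE 1) (CE 0)) (ILe (CE 0) (CE 1)))) ELIMROW Skip) (incC 1)) s'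
       (\<lambda>t s''. t \<le> 18*n+5 \<and> P (Suc i) s'')"
    proof (intro conjI b wp_seqI)
      define P' where "P' = (\<lambda>s''. wf s'' \<and> Cn s'' 0 = int c \<and> Cn s'' 1 = int i \<and>
        (\<forall>j<m. \<forall>k<6*n. Mm s'' j k = (if j < Suc i then melim M1 c j k else M1 j k)) \<and> Rr s'' = Rr s)"
      have Ms': "\<forall>j<m. \<forall>k<6*n. Mm s' j k = (if j < i then melim M1 c j k else M1 j k)" and R': "Rr s' = Rr s"
        using a unfolding P_def by auto
      show "wp (If (BNot (BAnd (ILe (CE 1) (CE 0)) (ILe (CE 0) (CE 1)))) ELIMROW Skip) s'
        (\<lambda>t s''. t \<le> 18*n+4 \<and> P' s'')"
      proof (cases "i = c")
        case True
        then show ?thesis using cn' wf' Ms' R' unfolding s' P'_def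
          by (auto simp: melim_def less_Suc_eq)
      next
        case False
        have "wp ELIMROW s' (\<lambda>t s''. Suc t \<le> 18*n+4 \<and> P' s'')"
          using elimrow[OF wf' cn' c a(2) False c3]
        proof (rule wp_mono)
          fix t s'' assume h: "t \<le> 18*n + 3 \<and> wf s'' \<and> Cn s'' 0 = int c \<and> Cn s'' 1 = int i \<and>
            (\<forall>j<m. \<forall>k<6*n. Mm s'' j k = (if j = i then Mm s' i k - (Mm s' i c / Mm s' c c) * Mm s' c k else Mm s' j k)) \<and>
            Rr s'' = Rr s'"
          have "\<forall>j<m. \<forall>k<6*n. Mm s'' j k = (if j < Suc i then melim M1 c j k else M1 j k)"
          proof (intro allI impI)
            fix j k assume jk: "j < m" "k < 6*n"
            have mc: "Mm s' c k' = M1 c k'" if "k' < 6*n" for k'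
              using Ms' c that by (auto simp: melim_def)
            show "Mm s'' j k = (if j < Suc i then melim M1 c j k else M1 j k)"
              using h jk Ms' mc[OF jk(2)] mc[OF c6] a(2) c6 False by (auto simp: melim_def less_Suc_eq)
          qed
          then show "Suc t \<le> 18*n+4 \<and> P' s''" using h R' unfolding P'_def by auto
        qed
        then show ?thesis using cn' False unfolding s' by simp
      qed
      fix t1 s1 assume h: "t1 \<le> 18*n+4 \<and> P' s1"
      then obtain cnt1 M1' sc1 R1 where s1: "s1 = (ints cnt1, mem M1' sc1 R1)" unfolding P'_def by (auto elim: wfE)
      show "wp (incC 1) s1 (\<lambda>t2 s2. t1 + t2 \<le> 18*n+5 \<and> P (Suc i) s2)"
        using h unfolding s1 P'_def P_def by (auto simp: incC_def setC_def)
    qed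
  next
    fix s' assume "P m s'"
    then show "\<not> beval (lt (CE 1) mE) s'" unfolding P_def by (auto elim!: wfE simp: lt_def)
  qed simp_all
  then show ?thesis by (rule wp_mono) (auto simp: P_def M1_def)
qed

definition "Pg Qf c s \<longleftrightarrow> wf s \<and> Cn s 0 = int c \<and> invQ (3*n) m Qf (Mm s) \<and> invS (3*n) m x (Mm s)
   \<and> invE m c (Mm s) \<and> Rr s = (\<lambda>_. 0)"

lemma gj_col:
  assumes indep: "\<forall>a :: nat \<Rightarrow> real. (\<forall>k<3*n. (\<Sum>i\<in>S. a i * x i k) = 0) \<longrightarrow> (\<forall>i\<in>S. a i = 0)"
    and S: "S \<subseteq> {..<m}" "card S = 3*n" and lin: "linQ (3*n) Qf" and loc: "locQ (3*n) Qf"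
    and P: "Pg Qf c s" and c3: "c < 3*n"
  shows "wp (Seq (Seq SEARCH (Seq SWAP ELIM)) (incC 0)) s
     (\<lambda>t s'. t \<le> 2*m + 30*n + (18*n+6)*m + 7 \<and> Pg Qf (Suc c) s')"
proof -
  have c6: "c < 6*n" and cm: "c < m" using c3 mn by simp_all
  have wf: "wf s" and cn: "Cn s 0 = int c" and iq: "invQ (3*n) m Qf (Mm s)" and iS: "invS (3*n) m x (Mm s)"
    and ie: "invE m c (Mm s)" and R: "Rr s = (\<lambda>_. 0)" using P by (auto simp: Pg_def)
  obtain p0 where "c \<le> p0 \<and> p0 < m \<and> Mm s p0 c \<noteq> 0" using gj_step[OF indep S iq iS ie lin c3] by blast
  define p where "p = (LEAST p. c \<le> p \<and> p < m \<and> Mm s p c \<noteq> 0)"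
  have p: "c \<le> p" "p < m" "Mm s p c \<noteq> 0"
    using LeastI[of "\<lambda>p. c \<le> p \<and> p < m \<and> Mm s p c \<noteq> 0", OF \<open>c \<le> p0 \<and> p0 < m \<and> Mm s p0 c \<noteq> 0\<close>]
    unfolding p_def by auto
  have z: "Mm s i c = 0" if "c \<le> i" "i < p" for i
    using not_less_Least[of i "\<lambda>p. c \<le> p \<and> p < m \<and> Mm s p c \<noteq> 0"] that p(2) unfolding p_def[symmetric] by auto
  have fin: "invQ (3*n) m Qf (melim (mswap (Mm s) c p) c) \<and> invS (3*n) m x (melim (mswap (Mm s) c p) c)
     \<and> invE m (Suc c) (melim (mswap (Mm s) c p) c)"
    by (rule gj_step2[OF iq iS ie lin p])
  show ?thesis
  proof (rule wp_seqI[of _ _ "\<lambda>t s'. t \<le> 2*m + 30*n + (18*n+6)*m + 6 \<and> wf s' \<and> Cn s' 0 = int c \<and>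
      (\<forall>j<m. \<forall>k<6*n. Mm s' j k = melim (mswap (Mm s) c p) c j k) \<and> Rr s' = (\<lambda>_. 0)"])
    show "wp (Seq SEARCH (Seq SWAP ELIM)) s (\<lambda>t s'. t \<le> 2*m + 30*n + (18*n+6)*m + 6 \<and> wf s' \<and> Cn s' 0 = int c \<and>
      (\<forall>j<m. \<forall>k<6*n. Mm s' j k = melim (mswap (Mm s) c p) c j k) \<and> Rr s' = (\<lambda>_. 0))"
    proof (rule wp_seqI[OF search[OF wf cn p z c6]])
      fix t1 s1 assume h1: "t1 \<le> 2*m + 2 \<and> wf s1 \<and> Cn s1 0 = int c \<and> Cn s1 1 = int p \<and> snd s1 = snd s"
      have Ms1: "Mm s1 = Mm s" "Rr s1 = Rr s" using h1 by (auto simp: Mm_def Rr_def fun_eq_iff)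
      show "wp (Seq SWAP ELIM) s1 (\<lambda>t2 s2. t1 + t2 \<le> 2*m + 30*n + (18*n+6)*m + 6 \<and> wf s2 \<and> Cn s2 0 = int c \<and>
      (\<forall>j<m. \<forall>k<6*n. Mm s2 j k = melim (mswap (Mm s) c p) c j k) \<and> Rr s2 = (\<lambda>_. 0))"
      proof (rule wp_seqI[OF swap[of s1 c p]])
        fix t2 s2 assume h2: "t2 \<le> 30*n + 2 \<and> wf s2 \<and> Cn s2 0 = int c \<and> Cn s2 1 = int p \<and>
          (\<forall>j<m. \<forall>k<6*n. Mm s2 j k = mswap (Mm s1) c p j k) \<and> Rr s2 = Rr s1"
        show "wp ELIM s2 (\<lambda>t3 s3. t1 + (t2 + t3) \<le> 2*m + 30*n + (18*n+6)*m + 6 \<and> wf s3 \<and> Cn s3 0 = int c \<and>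
           (\<forall>j<m. \<forall>k<6*n. Mm s3 j k = melim (mswap (Mm s) c p) c j k) \<and> Rr s3 = (\<lambda>_. 0))"
        proof (rule wp_mono)
          show "wp ELIM s2 (\<lambda>t s'. t \<le> (18 * n + 6) * m + 2 \<and> wf s' \<and> Cn s' 0 = int c \<and>
             (\<forall>j<m. \<forall>k<6*n. Mm s' j k = melim (Mm s2) c j k) \<and> Rr s' = Rr s2)"
            using elim[of s2 c] h2 c3 by auto
        next
          fix t3 s3 assume h3: "t3 \<le> (18*n + 6) * m + 2 \<and> wf s3 \<and> Cn s3 0 = int c \<and>
             (\<forall>j<m. \<forall>k<6*n. Mm s3 j k = melim (Mm s2) c j k) \<and> Rr s3 = Rr s2"
          have "Mm s3 j k = melim (mswap (Mm s) c p) c j k" if "j < m" "k < 6*n" for j k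
            using h3 h2 that cm c6 Ms1 by (simp add: melim_def)
          then show "t1 + (t2 + t3) \<le> 2*m + 30*n + (18*n+6)*m + 6 \<and> wf s3 \<and> Cn s3 0 = int c \<and>
           (\<forall>j<m. \<forall>k<6*n. Mm s3 j k = melim (mswap (Mm s) c p) c j k) \<and> Rr s3 = (\<lambda>_. 0)"
            using h1 h2 h3 R Ms1 by auto
        qed
      qed (use h1 cm p in auto)
    qed
  next
    fix t1 s1 assume h: "t1 \<le> 2*m + 30*n + (18*n+6)*m + 6 \<and> wf s1 \<and> Cn s1 0 = int c \<and>
      (\<forall>j<m. \<forall>k<6*n. Mm s1 j k = melim (mswap (Mm s) c p) c j k) \<and> Rr s1 = (\<lambda>_. 0)"
    then obtain cnt M sc R where s1: "s1 = (ints cnt, mem M sc R)" by (auto elim: wfE)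
    have agree: "\<And>j k. j < m \<Longrightarrow> k < 2*(3*n) \<Longrightarrow> melim (mswap (Mm s) c p) c j k = Mm s1 j k"
      using h by simp
    have "invQ (3*n) m Qf (Mm s1) \<and> invS (3*n) m x (Mm s1) \<and> invE m (Suc c) (Mm s1)"
      using invQ_cong[where M = "melim (mswap (Mm s) c p) c" and M' = "Mm s1" and N = "3*n" and m = m, OF agree loc]
        invS_cong[where M = "melim (mswap (Mm s) c p) c" and M' = "Mm s1" and N = "3*n" and m = m, OF agree]
        invE_cong[where M = "melim (mswap (Mm s) c p) c" and M' = "Mm s1" and N = "3*n" and m = m and c = "Suc c", OF agree]
        fin c3 mn by auto
    moreover have "Mm (ints (cnt(0 := cnt 0 + 1)), mem M sc R) = Mm s1" unfolding s1 Mm_def by simp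
    ultimately show "wp (incC 0) s1 (\<lambda>t2 s2. t1 + t2 \<le> 2*m + 30*n + (18*n+6)*m + 7 \<and> Pg Qf (Suc c) s2)"
      using h unfolding s1 Pg_def by (auto simp: incC_def setC_def)
  qed
qed

lemma gjloop:
  assumes indep: "\<forall>a :: nat \<Rightarrow> real. (\<forall>k<3*n. (\<Sum>i\<in>S. a i * x i k) = 0) \<longrightarrow> (\<forall>i\<in>S. a i = 0)"
    and S: "S \<subseteq> {..<m}" "card S = 3*n" and lin: "linQ (3*n) Qf" and loc: "locQ (3*n) Qf"
    and s: "wf s" "invQ (3*n) m Qf (Mm s)" "invS (3*n) m x (Mm s)" "invE m 0 (Mm s)" "Rr s = (\<lambda>_. 0)"
  shows "wp GJLOOP s (\<lambda>t s'. t \<le> (2*m + 30*n + (18*n+6)*m + 8) * (3*n) + 2 \<and> Pg Qf (3*n) s')"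
  unfolding GJLOOP_def
proof (rule wp_forC[where P = "Pg Qf" and lo = 0 and hi = "3*n"])
  from s(1) obtain cnt M sc R where s0: "s = (ints cnt, mem M sc R)" by (auto elim: wfE)
  have e: "Mm ((fst s)(nat (ieval (CA 0) s) := ieval (IConst 0) s), snd s) = Mm s" unfolding s0 Mm_def by simp
  show "Pg Qf 0 ((fst s)(nat (ieval (CA 0) s) := ieval (IConst 0) s), snd s)"
    using s unfolding Pg_def e by (simp add: s0)
next
  fix c s' assume a: "0 \<le> c" "c < 3*n" "Pg Qf c s'"
  have "beval (lt (CE 0) N3) s'" using a unfolding Pg_def by (auto elim!: wfE simp: lt_def)
  then show "beval (lt (CE 0) N3) s' \<and> wp (Seq (Seq SEARCH (Seq SWAP ELIM)) (incC 0)) s'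
     (\<lambda>t s''. t \<le> 2*m + 30*n + (18*n+6)*m + 7 \<and> Pg Qf (Suc c) s'')"
    using gj_col[OF indep S lin loc a(3) a(2)] by simp
next
  fix s' assume "Pg Qf (3*n) s'"
  then show "\<not> beval (lt (CE 0) N3) s'" unfolding Pg_def by (auto elim!: wfE simp: lt_def)
qed simp_all

definition "Rv M k = (if k < n then sqrt 2 * M n (4*n + k) / M n n
   else if 3*n \<le> k \<and> k < 4*n then sqrt 2 * M n (5*n + (k - 3*n)) / M n n else 0)"

lemma rcomp:
  assumes s: "s = (ints cnt, mem M sc (\<lambda>_. 0))"
  shows "wp RCOMP s (\<lambda>t s'. t \<le> 4*n + 2 \<and> (\<exists>cnt'. s' = (ints cnt', mem M sc (Rv M))))"
proof -
  define P where "P = (\<lambda>kk s'. \<exists>cnt'. s' = (ints cnt', mem M sc (\<lambda>k. if k < kk \<or> (3*n \<le> k \<and> k < 3*n + kk) then Rv M k else 0))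
      \<and> cnt' 2 = int kk)"
  have nm': "n < m" using nm .
  have "wp RCOMP s (\<lambda>t s'. t \<le> 4*n + 2 \<and> P n s')"
    unfolding RCOMP_def
  proof (rule wp_forC[where P = P and lo = 0 and hi = n])
    have "(\<lambda>k. if k < 0 \<or> (3*n \<le> k \<and> k < 3*n + 0) then Rv M k else 0) = (\<lambda>_. 0)" by auto
    then show "P 0 ((fst s)(nat (ieval (CA 2) s) := ieval (IConst 0) s), snd s)"
      unfolding P_def s by (simp only:) (auto intro!: exI[of _ "cnt(2 := 0)"])
  next
    fix kk s' assume a: "0 \<le> kk" "kk < n" "P kk s'"
    then obtain cnt' where s': "s' = (ints cnt', mem M sc (\<lambda>k. if k < kk \<or> (3*n \<le> k \<and> k < 3*n + kk) then Rv M k else 0))"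
      "cnt' 2 = int kk" unfolding P_def by auto
    have R1: "(\<lambda>k. if k < kk \<or> (3*n \<le> k \<and> k < 3*n + kk) then Rv M k else 0)(kk := Rv M kk, 3*n + kk := Rv M (3*n+kk))
       = (\<lambda>k. if k < Suc kk \<or> (3*n \<le> k \<and> k < Suc (3*n + kk)) then Rv M k else 0)"
      using a by (auto simp: fun_eq_iff)
    have v: "Rv M kk = sqrt 2 * M n (4*n + kk) / M n n" "Rv M (3*n+kk) = sqrt 2 * M n (5*n + kk) / M n n"
      using a by (auto simp: Rv_def)
    show "beval (lt (CE 2) nE) s' \<and> wp (Seq (Seq
       (RStore (RA (CE 2)) (RDiv (RMul sqrt2 (RLoad (WA nE (IAdd (IMul (IConst 4) nE) (CE 2))))) (RLoad (WA nE nE))))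
       (RStore (RA (IAdd N3 (CE 2))) (RDiv (RMul sqrt2 (RLoad (WA nE (IAdd (IMul (IConst 5) nE) (CE 2))))) (RLoad (WA nE nE)))))
       (incC 2)) s' (\<lambda>t s''. t \<le> 3 \<and> P (Suc kk) s'')"
      using a nm' s'(2) unfolding s'(1) P_def
      by (simp add: lt_def incC_def setC_def sqrt2_def v[symmetric] R1) (auto intro!: exI[of _ "cnt'(2 := int kk + 1)"])
  next
    fix s' assume "P n s'"
    then show "\<not> beval (lt (CE 2) nE) s'" unfolding P_def by (auto simp: lt_def)
  qed simp_all
  moreover have e: "(\<lambda>k. if k < n \<or> (3*n \<le> k \<and> k < 3*n + n) then Rv M k else 0) = Rv M"
    by (auto simp: fun_eq_iff Rv_def)
  ultimately show ?thesis by (elim wp_mono) (auto simp: P_def e)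
qed

definition "D1 R i = (\<Sum>k<3*n. R k * x i k)"
definition "D2 R i = (\<Sum>k<3*n. R (3*n + k) * x i k)"

lemma dot:
  assumes s: "wf s" "Cn s 1 = int i" and i: "i < m"
  shows "wp DOT s (\<lambda>t s'. t \<le> 12*n + 4 \<and> wf s' \<and> Cn s' 1 = int i \<and> Rr s' = Rr s \<and>
    Sc s' 2 = D1 (Rr s) i \<and> Sc s' 3 = D2 (Rr s) i \<and> (\<forall>t. 4 \<le> t \<and> t < 8 \<longrightarrow> Sc s' t = Sc s t))"
proof -
  from s obtain cnt M sc R where s0: "s = (ints cnt, mem M sc R)" by (auto elim: wfE)
  define P where "P = (\<lambda>kk s'. wf s' \<and> Cn s' 1 = int i \<and> Cn s' 2 = int kk \<and> Rr s' = R \<and>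
    Sc s' 2 = (\<Sum>k<kk. R k * x i k) \<and> Sc s' 3 = (\<Sum>k<kk. R (3*n + k) * x i k) \<and>
    (\<forall>t. 4 \<le> t \<and> t < 8 \<longrightarrow> Sc s' t = sc t))"
  let ?s1 = "(ints cnt, mem M (sc(2 := 0, 3 := 0)) R)"
  have "wp (forC 2 (IConst 0) N3
   (Seq (RStore (SA 2) (RAdd (RLoad (SA 2)) (RMul (RLoad (RA (CE 2))) (RLoad (XA (CE 1) (CE 2))))))
        (RStore (SA 3) (RAdd (RLoad (SA 3)) (RMul (RLoad (RA (IAdd N3 (CE 2)))) (RLoad (XA (CE 1) (CE 2)))))))) ?s1
     (\<lambda>t s'. t \<le> 12*n + 2 \<and> P (3*n) s')"
  proof (rule wp_forC[where P = P and lo = 0 and hi = "3*n"])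
    show "P 0 ((fst ?s1)(nat (ieval (CA 2) ?s1) := ieval (IConst 0) ?s1), snd ?s1)"
      using s unfolding P_def s0 by simp
  next
    fix kk s' assume a: "0 \<le> kk" "kk < 3*n" "P kk s'"
    then obtain cnt' M' sc' where s': "s' = (ints cnt', mem M' sc' R)" "cnt' 1 = int i" "cnt' 2 = int kk"
      "sc' 2 = (\<Sum>k<kk. R k * x i k)" "sc' 3 = (\<Sum>k<kk. R (3*n + k) * x i k)" "\<forall>t. 4 \<le> t \<and> t < 8 \<longrightarrow> sc' t = sc t"
      unfolding P_def by (auto elim!: wfE)
    show "beval (lt (CE 2) N3) s' \<and> wp (Seq
     (Seq (RStore (SA 2) (RAdd (RLoad (SA 2)) (RMul (RLoad (RA (CE 2))) (RLoad (XA (CE 1) (CE 2))))))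
        (RStore (SA 3) (RAdd (RLoad (SA 3)) (RMul (RLoad (RA (IAdd N3 (CE 2)))) (RLoad (XA (CE 1) (CE 2))))))) (incC 2)) s'
       (\<lambda>t s''. t \<le> 3 \<and> P (Suc kk) s'')"
      using a i s'(2-6) unfolding s'(1) P_def
      by (auto simp: lt_def incC_def setC_def)
  next
    fix s' assume "P (3*n) s'"
    then show "\<not> beval (lt (CE 2) N3) s'" unfolding P_def by (auto elim!: wfE simp: lt_def)
  qed simp_all
  then show ?thesis unfolding DOT_def s0
    by simp (erule wp_mono; auto simp: P_def D1_def D2_def)
qed

primrec Bs :: "(nat \<Rightarrow> real) \<Rightarrow> nat \<Rightarrow> real" where
  "Bs R 0 = 1"
| "Bs R (Suc i) = Bs R i + sqrt (D1 R i * D1 R i) + sqrt (D2 R i * D2 R i)"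

primrec Cm :: "real \<Rightarrow> (nat \<Rightarrow> real) \<Rightarrow> nat \<Rightarrow> real" where
  "Cm B d 0 = - B"
| "Cm B d (Suc i) = (if z i then (if Cm B d i \<le> d i then d i else Cm B d i) else Cm B d i)"

lemma bpass:
  assumes s: "wf s"
  shows "wp BPASS s (\<lambda>t s'. t \<le> (12*n + 7) * m + 3 \<and> wf s' \<and> Rr s' = Rr s \<and> Sc s' 4 = Bs (Rr s) m)"
proof -
  from s obtain cnt M sc R where s0: "s = (ints cnt, mem M sc R)" by (auto elim: wfE)
  define P where "P = (\<lambda>i s'. wf s' \<and> Cn s' 1 = int i \<and> Rr s' = R \<and> Sc s' 4 = Bs R i)"
  let ?s1 = "(ints cnt, mem M (sc(4 := 1)) R)"
  have "wp (forC 1 (IConst 0) mE (Seq DOT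
   (RStore (SA 4) (RAdd (RAdd (RLoad (SA 4)) (RSqrt (RMul (RLoad (SA 2)) (RLoad (SA 2)))))
      (RSqrt (RMul (RLoad (SA 3)) (RLoad (SA 3)))))))) ?s1 (\<lambda>t s'. t \<le> (12*n + 7) * m + 2 \<and> P m s')"
  proof (rule wp_forC[where P = P and lo = 0 and hi = m])
    show "P 0 ((fst ?s1)(nat (ieval (CA 1) ?s1) := ieval (IConst 0) ?s1), snd ?s1)"
      unfolding P_def by simp
  next
    fix i s' assume a: "0 \<le> i" "i < m" "P i s'"
    have wf': "wf s'" and c': "Cn s' 1 = int i" and R': "Rr s' = R" and B': "Sc s' 4 = Bs R i"
      using a unfolding P_def by auto
    have "beval (lt (CE 1) mE) s'" using wf' c' a(2) by (auto elim!: wfE simp: lt_def)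
    moreover have "wp (Seq (Seq DOT
      (RStore (SA 4) (RAdd (RAdd (RLoad (SA 4)) (RSqrt (RMul (RLoad (SA 2)) (RLoad (SA 2)))))
      (RSqrt (RMul (RLoad (SA 3)) (RLoad (SA 3))))))) (incC 1)) s' (\<lambda>t s''. t \<le> 12*n+6 \<and> P (Suc i) s'')"
      apply (simp only: wp_Seq)
      apply (rule wp_mono[OF dot[OF wf' c' a(2)]])
      apply (elim conjE)
      apply (erule wfE)
      using R' B' apply (simp add: incC_def setC_def P_def)
      done
    ultimately show "beval (lt (CE 1) mE) s' \<and> wp (Seq (Seq DOT
      (RStore (SA 4) (RAdd (RAdd (RLoad (SA 4)) (RSqrt (RMul (RLoad (SA 2)) (RLoad (SA 2)))))
      (RSqrt (RMul (RLoad (SA 3)) (RLoad (SA 3))))))) (incC 1)) s' (\<lambda>t s''. t \<le> 12*n+6 \<and> P (Suc i) s'')"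
      by blast
  next
    fix s' assume "P m s'"
    then show "\<not> beval (lt (CE 1) mE) s'" unfolding P_def by (auto elim!: wfE simp: lt_def)
  qed simp_all
  then show ?thesis unfolding BPASS_def s0
    by simp (erule wp_mono; auto simp: P_def)
qed

lemma cpass:
  assumes s: "wf s" "Sc s 4 = B"
  shows "wp CPASS s (\<lambda>t s'. t \<le> (12*n + 11) * m + 4 \<and> wf s' \<and> Rr s' = Rr s \<and>
     Sc s' 5 = Cm B (D1 (Rr s)) m \<and> Sc s' 6 = Cm B (D2 (Rr s)) m)"
proof -
  from s obtain cnt M sc R where s0: "s = (ints cnt, mem M sc R)" by (auto elim: wfE)
  have B: "sc 4 = B" using s by (simp add: s0)
  define P where "P = (\<lambda>i s'. wf s' \<and> Cn s' 1 = int i \<and> Rr s' = R \<and> Sc s' 4 = B \<and>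
     Sc s' 5 = Cm B (D1 R) i \<and> Sc s' 6 = Cm B (D2 R) i)"
  let ?s1 = "(ints cnt, mem M (sc(5 := - B, 6 := - B)) R)"
  let ?body = "If (ILe (IConst 1) (LB (CE 1)))
      (Seq (If (RLe (RLoad (SA 5)) (RLoad (SA 2))) (RStore (SA 5) (RLoad (SA 2))) Skip)
           (If (RLe (RLoad (SA 6)) (RLoad (SA 3))) (RStore (SA 6) (RLoad (SA 3))) Skip)) Skip"
  have "wp (forC 1 (IConst 0) mE (Seq DOT ?body)) ?s1 (\<lambda>t s'. t \<le> (12*n + 11) * m + 2 \<and> P m s')"
  proof (rule wp_forC[where P = P and lo = 0 and hi = m])
    show "P 0 ((fst ?s1)(nat (ieval (CA 1) ?s1) := ieval (IConst 0) ?s1), snd ?s1)"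
      unfolding P_def using B by simp
  next
    fix i s' assume a: "0 \<le> i" "i < m" "P i s'"
    have wf': "wf s'" and c': "Cn s' 1 = int i" and R': "Rr s' = R" and B': "Sc s' 4 = B"
      and C': "Sc s' 5 = Cm B (D1 R) i" "Sc s' 6 = Cm B (D2 R) i"
      using a unfolding P_def by auto
    have "beval (lt (CE 1) mE) s'" using wf' c' a(2) by (auto elim!: wfE simp: lt_def)
    moreover have "wp (Seq (Seq DOT ?body) (incC 1)) s' (\<lambda>t s''. t \<le> 12*n+10 \<and> P (Suc i) s'')"
      apply (simp only: wp_Seq)
      apply (rule wp_mono[OF dot[OF wf' c' a(2)]])
      apply (elim conjE)
      apply (erule wfE)
      using R' B' C' a(2) apply (auto simp: incC_def setC_def P_def)
      done
    ultimately show "beval (lt (CE 1) mE) s' \<and> wp (Seq (Seq DOT ?body) (incC 1)) s' (\<lambda>t s''. t \<le> 12*n+10 \<and> P (Suc i) s'')"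
      by blast
  next
    fix s' assume "P m s'"
    then show "\<not> beval (lt (CE 1) mE) s'" unfolding P_def by (auto elim!: wfE simp: lt_def)
  qed simp_all
  then show ?thesis unfolding CPASS_def s0
    by (simp add: B) (erule wp_mono; auto simp: P_def)
qed

lemma out:
  assumes s: "wf s"
  shows "wp OUT s (\<lambda>t s'. t \<le> 18*n + 4 \<and> (\<forall>k<6*n. snd s' k = Rr s k) \<and>
     snd s' (6*n) = Sc s 5 \<and> snd s' (6*n + 1) = Sc s 6)"
proof -
  from s obtain cnt M sc R where s0: "s = (ints cnt, mem M sc R)" by (auto elim: wfE)
  define P where "P = (\<lambda>kk s'. (\<exists>cnt'. fst s' = ints cnt' \<and> cnt' 2 = int kk) \<and>
      snd s' = (\<lambda>a. if a < kk then R a else mem M sc R a))"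
  have "wp (forC 2 (IConst 0) N6 (RStore (CE 2) (RLoad (RA (CE 2))))) s (\<lambda>t s'. t \<le> 18*n + 2 \<and> P (6*n) s')"
  proof (rule wp_forC[where P = P and lo = 0 and hi = "6*n"])
    show "P 0 ((fst s)(nat (ieval (CA 2) s) := ieval (IConst 0) s), snd s)"
      unfolding P_def s0 by (auto simp: fun_eq_iff)
  next
    fix kk s' assume a: "0 \<le> kk" "kk < 6*n" "P kk s'"
    then obtain cnt' where s': "s' = (ints cnt', (\<lambda>a. if a < kk then R a else mem M sc R a))" "cnt' 2 = int kk"
      unfolding P_def by (metis prod.collapse)
    have e: "(\<lambda>a. if a < kk then R a else mem M sc R a)(kk := R kk) = (\<lambda>a. if a < Suc kk then R a else mem M sc R a)"
      by (auto simp: fun_eq_iff)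
    show "beval (lt (CE 2) N6) s' \<and> wp (Seq (RStore (CE 2) (RLoad (RA (CE 2)))) (incC 2)) s'
       (\<lambda>t s''. t \<le> 2 \<and> P (Suc kk) s'')"
      using a s'(2) unfolding s'(1) P_def by (simp add: lt_def incC_def setC_def e) (auto intro!: exI[of _ "cnt'(2 := int kk + 1)"])
  next
    fix s' assume "P (6*n) s'"
    then obtain cnt' where s': "s' = (ints cnt', (\<lambda>a. if a < 6*n then R a else mem M sc R a))" "cnt' 2 = int (6*n)"
      unfolding P_def by (metis prod.collapse)
    show "\<not> beval (lt (CE 2) N6) s'" unfolding s'(1) using s'(2) by (simp add: lt_def)
  qed simp_all
  then show ?thesis unfolding OUT_def
  proof (rule wp_seqI)
    fix t1 s1 assume h: "t1 \<le> 18*n + 2 \<and> P (6*n) s1"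
    then obtain cnt' where s1: "s1 = (ints cnt', (\<lambda>a. if a < 6*n then R a else mem M sc R a))"
      unfolding P_def by (metis prod.collapse)
    show "wp (Seq (RStore N6 (RLoad (SA 5))) (RStore (IAdd N6 (IConst 1)) (RLoad (SA 6)))) s1
          (\<lambda>t2 s2. t1 + t2 \<le> 18*n + 4 \<and> (\<forall>k<6*n. snd s2 k = Rr s k) \<and> snd s2 (6*n) = Sc s 5 \<and> snd s2 (6*n + 1) = Sc s 6)"
      using h unfolding s1 s0 by simp
  qed
qed

end

definition "PROG = Seq COPY (Seq GJLOOP (Seq RCOMP (Seq BPASS (Seq CPASS OUT))))"

lemma wp_seqB: "wp c1 s (\<lambda>t s'. t \<le> B1 \<and> P1 s') \<Longrightarrow> (\<And>s'. P1 s' \<Longrightarrow> wp c2 s' (\<lambda>t s''. t \<le> B2 \<and> P2 s'')) \<Longrightarrow>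
  wp (Seq c1 c2) s (\<lambda>t s''. t \<le> B1 + B2 \<and> P2 s'')"
proof (erule wp_seqI)
  fix t1 s1 assume h: "t1 \<le> B1 \<and> P1 s1" and c: "\<And>s'. P1 s' \<Longrightarrow> wp c2 s' (\<lambda>t s''. t \<le> B2 \<and> P2 s'')"
  have "wp c2 s1 (\<lambda>t s''. t \<le> B2 \<and> P2 s'')" using c h by blast
  then show "wp c2 s1 (\<lambda>t2 s2. t1 + t2 \<le> B1 + B2 \<and> P2 s2)"
    by (rule wp_mono) (use h in auto)
qed

lemma Qmap_lin: "linQ (3*n) (Qmap n F r1 r2)"
  unfolding linQ_def Qmap_def
  by (auto simp: sum_subtractf sum_distrib_left algebra_simps)

lemma Qmap_loc: "locQ (3*n) (Qmap n F r1 r2)"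
  unfolding locQ_def Qmap_def
proof (intro allI impI)
  fix a b :: "nat \<Rightarrow> real" and k assume h: "\<forall>i<3*n. a i = b i"
  show "(if k < n then a k else \<Sum>ba<2 * n. F r1 r2 (k - n) ba * a (n + ba)) =
        (if k < n then b k else \<Sum>ba<2 * n. F r1 r2 (k - n) ba * b (n + ba))"
    using h by (auto intro!: sum.cong)
qed

context L begin

lemma Bs_mono: "i \<le> i' \<Longrightarrow> Bs R i \<le> Bs R i'"
proof (induction i' )
  case 0 then show ?case by simp
next
  case (Suc i')
  then show ?case
    by (cases "i = Suc i'") (auto intro: order_trans[OF _ add_increasing2[of "sqrt (D2 R i' * D2 R i')"]])
qed

lemma Bs_bound: "j < i \<Longrightarrow> - Bs R i < D1 R j \<and> - Bs R i < D2 R j"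
proof -
  assume j: "j < i"
  have "1 \<le> Bs R j" using Bs_mono[of 0 j R] by simp
  then have "Bs R (Suc j) \<ge> 1 + \<bar>D1 R j\<bar> + \<bar>D2 R j\<bar>"
    by (simp add: real_sqrt_mult_self)
  moreover have "Bs R (Suc j) \<le> Bs R i" using j by (intro Bs_mono) simp
  ultimately show ?thesis by linarith
qed

lemma Cm_props: "(\<forall>j<i. z j \<longrightarrow> d j \<le> Cm B d i) \<and> (Cm B d i = - B \<or> (\<exists>j<i. z j \<and> Cm B d i = d j))"
  by (induction i) (auto simp: less_Suc_eq)

lemma classify:
  assumes lb: "\<forall>j<m. - B < d1 j \<and> - B < d2 j"
    and tru: "\<forall>i<m. z i \<longleftrightarrow> (d1 i \<le> c1 \<and> d2 i \<le> c2)" and i: "i < m"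
  shows "(d1 i \<le> Cm B d1 m \<and> d2 i \<le> Cm B d2 m) \<longleftrightarrow> z i"
proof
  assume "z i" then show "d1 i \<le> Cm B d1 m \<and> d2 i \<le> Cm B d2 m" using Cm_props[of m d1 B] Cm_props[of m d2 B] i by auto
next
  assume h: "d1 i \<le> Cm B d1 m \<and> d2 i \<le> Cm B d2 m"
  have a: "Cm B d1 m = - B \<or> Cm B d1 m \<le> c1" using Cm_props[of m d1 B] tru by fastforce
  have b: "Cm B d2 m = - B \<or> Cm B d2 m \<le> c2" using Cm_props[of m d2 B] tru by fastforce
  have "d1 i \<le> c1" using a h lb i by force
  moreover have "d2 i \<le> c2" using b h lb i by force
  ultimately show "z i" using tru i by auto
qed

lemma init_eq: "init_state n m x y z = (ints (\<lambda>_. 0), mem (\<lambda>_ _. 0) (\<lambda>_. 0) (\<lambda>_. 0))"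
proof -
  have "fst (init_state n m x y z) = ints (\<lambda>_. 0)"
    by (auto simp: init_state_def ints_def fun_eq_iff)
  moreover have "snd (init_state n m x y z) = mem (\<lambda>_ _. 0) (\<lambda>_. 0) (\<lambda>_. 0)"
    by (auto simp: init_state_def mem_def base_def fun_eq_iff mult.assoc)
  ultimately show ?thesis by (metis prod.collapse)
qed

definition "Rt r1 r2 k = (if k < n then r1 k else if 3*n \<le> k \<and> k < 4*n then r2 (k - 3*n) else (0::real))"

lemma Rv_eq:
  assumes adm: "admissible_F n F" and u: "unit_vec n r1" "unit_vec n r2"
    and P: "Pg (Qmap n F r1 r2) (3*n) s" and s: "s = (ints cnt, mem M sc R)"
  shows "Rv M = Rt r1 r2"
proof -
  have nm': "n < m" using nm .
  have iq: "invQ (3*n) m (Qmap n F r1 r2) (Mm s)" and ie: "invE m (3*n) (Mm s)" using P by (auto simp: Pg_def)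
  have MM: "Mm s j k = M j k" if "j < m" "k < 6*n" for j k using that by (simp add: s)
  have E: "M n (n + b) = 0" if "b < 2*n" "b \<noteq> 0" for b
    using ie that nm' MM[of n "n+b"] unfolding invE_def by auto
  have Mnn: "M n n \<noteq> 0" using ie nm' MM[of n n] npos unfolding invE_def by auto
  have Q: "M n (4*n + k') = F r1 r2 k' 0 * M n n" if k': "k' < 2*n" for k'
  proof -
    have k3: "n + k' < 3*n" using k' by simp
    have "\<forall>k<3*n. Mm s n (3*n + k) = Qmap n F r1 r2 (Mm s n) k" using iq nm' unfolding invQ_def by blast
    then have "Mm s n (3*n + (n + k')) = Qmap n F r1 r2 (Mm s n) (n + k')" using k3 by blast
    also have "\<dots> = (\<Sum>b<2*n. F r1 r2 k' b * M n (n + b))" using MM nm' by (simp add: Qmap_def)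
    also have "\<dots> = (\<Sum>b\<in>{0}. F r1 r2 k' b * M n (n + b))"
      using E npos by (intro sum.mono_neutral_right) auto
    finally show ?thesis using MM[of n "4*n+k'"] nm' k' by (simp add: add.assoc)
  qed
  have F: "F r1 r2 k 0 = r1 k / sqrt 2" "F r1 r2 (n + k) 0 = r2 k / sqrt 2" if "k < n" for k
    using adm u that unfolding admissible_F_def by auto
  show ?thesis
  proof
    fix k
    show "Rv M k = Rt r1 r2 k"
    proof (cases "k < n")
      case True
      then show ?thesis using Q[of k] F[of k] Mnn by (simp add: Rv_def Rt_def)
    next
      case False
      show ?thesis
      proof (cases "3*n \<le> k \<and> k < 4*n")
        case True
        have e: "5*n + (k - 3*n) = 4*n + (n + (k - 3*n))" using True by simp
        show ?thesis using True False Q[of "n + (k - 3*n)"] F[of "k - 3*n"] Mnn unfolding Rv_def Rt_def e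
          by auto
      qed (use False in \<open>auto simp: Rv_def Rt_def\<close>)
    qed
  qed
qed

lemma sum_Rt1: "(\<Sum>k<3*n. Rt r1 r2 k * f k) = (\<Sum>k<n. r1 k * f k)"
proof -
  have "(\<Sum>k<3*n. Rt r1 r2 k * f k) = (\<Sum>k<n. Rt r1 r2 k * f k)"
    by (rule sum.mono_neutral_right) (auto simp: Rt_def)
  then show ?thesis by (simp add: Rt_def)
qed

lemma sum_Rt2: "(\<Sum>k<3*n. Rt r1 r2 (3*n + k) * f k) = (\<Sum>k<n. r2 k * f k)"
proof -
  have "(\<Sum>k<3*n. Rt r1 r2 (3*n + k) * f k) = (\<Sum>k<n. Rt r1 r2 (3*n + k) * f k)"
    by (rule sum.mono_neutral_right) (auto simp: Rt_def)
  then show ?thesis by (simp add: Rt_def)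
qed

lemma sum_Rt1sq: "(\<Sum>k<3*n. (Rt r1 r2 k)\<^sup>2) = (\<Sum>k<n. (r1 k)\<^sup>2)"
proof -
  have "(\<Sum>k<3*n. (Rt r1 r2 k)\<^sup>2) = (\<Sum>k<n. (Rt r1 r2 k)\<^sup>2)"
    by (rule sum.mono_neutral_right) (auto simp: Rt_def)
  then show ?thesis by (simp add: Rt_def)
qed

lemma sum_Rt2sq: "(\<Sum>k<3*n. (Rt r1 r2 (3*n + k))\<^sup>2) = (\<Sum>k<n. (r2 k)\<^sup>2)"
proof -
  have "(\<Sum>k<3*n. (Rt r1 r2 (3*n + k))\<^sup>2) = (\<Sum>k<n. (Rt r1 r2 (3*n + k))\<^sup>2)"
    by (rule sum.mono_neutral_right) (auto simp: Rt_def)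
  then show ?thesis by (simp add: Rt_def)
qed

definition "FINAL s' \<longleftrightarrow> unit_vec (3*n) (out_r1 n s') \<and> unit_vec (3*n) (out_r2 n s') \<and>
   (\<forall>i<m. hyp n (out_r1 n s') (out_r2 n s') (out_c1 n s') (out_c2 n s') (x i) = z i)"

lemma main:
  assumes adm: "admissible_F n F" and inst: "mm_instance n m F x y z" and ind: "has_3n_indep n m x"
  shows "wp PROG (init_state n m x y z) (\<lambda>t s'. t \<le> ((12*n + 4) * m + 2) + (((2*m + 30*n + (18*n+6)*m + 8) * (3*n) + 2)
     + ((4*n + 2) + (((12*n + 7) * m + 3) + (((12*n + 11) * m + 4) + (18*n + 4))))) \<and> FINAL s')"
proof -
  obtain r1 r2 c1 c2 where u: "unit_vec n r1" "unit_vec n r2"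
    and lab: "\<forall>i<m. z i \<longleftrightarrow> ((\<Sum>k<n. r1 k * x i k) \<le> c1 \<and> (\<Sum>k<n. r2 k * x i k) \<le> c2)"
    and yq: "\<forall>i<m. \<forall>k<3*n. y i k = Qmap n F r1 r2 (x i) k"
    using inst unfolding mm_instance_def by blast
  obtain S where S: "S \<subseteq> {..<m}" "card S = 3*n"
    and indep: "\<forall>a :: nat \<Rightarrow> real. (\<forall>k<3*n. (\<Sum>i\<in>S. a i * x i k) = 0) \<longrightarrow> (\<forall>i\<in>S. a i = 0)"
    using ind unfolding has_3n_indep_def by blast
  define Qf where "Qf = Qmap n F r1 r2"
  have lin: "linQ (3*n) Qf" and loc: "locQ (3*n) Qf" unfolding Qf_def by (rule Qmap_lin, rule Qmap_loc)
  have P0: "Pcout 0 (init_state n m x y z)" unfolding init_eq Pcout_def by simp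
  show ?thesis unfolding PROG_def
  proof (rule wp_seqB[OF copy[OF P0]])
    fix s1 assume P1: "Pcout m s1"
    have wf1: "wf s1" and M1: "\<forall>j<m. \<forall>k<6*n. Mm s1 j k = M0 j k" and R1: "Rr s1 = (\<lambda>_. 0)"
      using P1 unfolding Pcout_def by auto
    have iq: "invQ (3*n) m Qf (Mm s1)"
      unfolding invQ_def
    proof (intro allI impI)
      fix j k assume jk: "j < m" "k < 3*n"
      have "Qf (Mm s1 j) k = Qf (x j) k"
        using loc M1 jk(1) unfolding locQ_def by (auto simp: M0_def)
      then show "Mm s1 j (3*n + k) = Qf (Mm s1 j) k" using M1 jk yq by (simp add: M0_def Qf_def)
    qed
    have iS: "invS (3*n) m x (Mm s1)"
      unfolding invS_def
    proof (intro allI impI)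
      fix i assume i: "i < m"
      have "trunc (3*n) (x i) = trunc (3*n) (Mm s1 i)" using M1 i by (auto simp: trunc_def M0_def fun_eq_iff)
      then show "trunc (3*n) (x i) \<in> fv.span ((\<lambda>j. trunc (3*n) (Mm s1 j)) ` {..<m})"
        using i by (auto intro: fv.span_base)
    qed
    have ie: "invE m 0 (Mm s1)" by (simp add: invE_def)
    show "wp (Seq GJLOOP (Seq RCOMP (Seq BPASS (Seq CPASS OUT)))) s1 (\<lambda>t s''. t \<le> ((2*m + 30*n + (18*n+6)*m + 8) * (3*n) + 2)
     + ((4*n + 2) + (((12*n + 7) * m + 3) + (((12*n + 11) * m + 4) + (18*n + 4)))) \<and> FINAL s'')"
    proof (rule wp_seqB[OF gjloop[OF indep S lin loc wf1 iq iS ie R1]])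
      fix s2 assume P2: "Pg Qf (3*n) s2"
      then have "wf s2" "Rr s2 = (\<lambda>_. 0)" by (auto simp: Pg_def)
      then obtain cnt M sc where s2: "s2 = (ints cnt, mem M sc (\<lambda>_. 0))" by (auto elim!: wfE)
      have Rv: "Rv M = Rt r1 r2" using Rv_eq[OF adm u P2[unfolded Qf_def] s2] .
      show "wp (Seq RCOMP (Seq BPASS (Seq CPASS OUT))) s2 (\<lambda>t s''. t \<le> (4*n + 2) + (((12*n + 7) * m + 3) + (((12*n + 11) * m + 4) + (18*n + 4))) \<and> FINAL s'')"
      proof (rule wp_seqB[OF rcomp[OF s2]])
        fix s3 assume "\<exists>cnt'. s3 = (ints cnt', mem M sc (Rv M))"
        then have wf3: "wf s3" and R3: "Rr s3 = Rt r1 r2" using Rv by auto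
        show "wp (Seq BPASS (Seq CPASS OUT)) s3 (\<lambda>t s''. t \<le> ((12*n + 7) * m + 3) + (((12*n + 11) * m + 4) + (18*n + 4)) \<and> FINAL s'')"
        proof (rule wp_seqB[OF bpass[OF wf3]])
          fix s4 assume P4: "wf s4 \<and> Rr s4 = Rr s3 \<and> Sc s4 4 = Bs (Rr s3) m"
          show "wp (Seq CPASS OUT) s4 (\<lambda>t s''. t \<le> ((12*n + 11) * m + 4) + (18*n + 4) \<and> FINAL s'')"
          proof (rule wp_seqB[OF cpass[of s4 "Bs (Rr s3) m"]])
            show "wf s4" "Sc s4 4 = Bs (Rr s3) m" using P4 by auto
          next
            fix s5 assume P5: "wf s5 \<and> Rr s5 = Rr s4 \<and> Sc s5 5 = Cm (Bs (Rr s3) m) (D1 (Rr s4)) m \<and>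
               Sc s5 6 = Cm (Bs (Rr s3) m) (D2 (Rr s4)) m"
            have O: "wp OUT s5 (\<lambda>t s'. t \<le> 18 * n + 4 \<and> (\<forall>k<6 * n. snd s' k = Rr s5 k) \<and>
              snd s' (6 * n) = Sc s5 5 \<and> snd s' (6 * n + 1) = Sc s5 6)" using out[of s5] P5 by auto
            define R where "R = Rt r1 r2"
            define B where "B = Bs R m"
            have RR: "Rr s5 = R" "Rr s4 = R" "Rr s3 = R" using P5 P4 R3 by (auto simp: R_def)
            show "wp OUT s5 (\<lambda>t s''. t \<le> 18*n + 4 \<and> FINAL s'')"
            proof (rule wp_mono[OF O])
              fix t and s6 :: state assume h: "t \<le> 18 * n + 4 \<and> (\<forall>k<6 * n. snd s6 k = Rr s5 k) \<and>
                snd s6 (6 * n) = Sc s5 5 \<and> snd s6 (6 * n + 1) = Sc s5 6"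
              have o1: "out_r1 n s6 k = R k" if "k < 3*n" for k using h RR that by (auto simp: out_r1_def)
              have o2: "out_r2 n s6 k = R (3*n + k)" if "k < 3*n" for k using h RR that by (auto simp: out_r2_def)
              have oc: "out_c1 n s6 = Cm B (D1 R) m" "out_c2 n s6 = Cm B (D2 R) m"
                using h P5 RR by (auto simp: out_c1_def out_c2_def B_def)
              have u1: "unit_vec (3*n) (out_r1 n s6)"
              proof -
                have "(\<Sum>k<3*n. (out_r1 n s6 k)\<^sup>2) = (\<Sum>k<3*n. (R k)\<^sup>2)" using o1 by (intro sum.cong) auto
                also have "\<dots> = 1" using sum_Rt1sq[of r1 r2] u(1) unfolding R_def unit_vec_def by simp
                finally show ?thesis unfolding unit_vec_def .
              qed
              have u2: "unit_vec (3*n) (out_r2 n s6)"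
              proof -
                have "(\<Sum>k<3*n. (out_r2 n s6 k)\<^sup>2) = (\<Sum>k<3*n. (R (3*n + k))\<^sup>2)" using o2 by (intro sum.cong) auto
                also have "\<dots> = 1" using sum_Rt2sq[of r1 r2] u(2) unfolding R_def unit_vec_def by simp
                finally show ?thesis unfolding unit_vec_def .
              qed
              have d1: "(\<Sum>k<3*n. out_r1 n s6 k * x i k) = D1 R i" for i
                unfolding D1_def using o1 by (intro sum.cong) auto
              have d2: "(\<Sum>k<3*n. out_r2 n s6 k * x i k) = D2 R i" for i
                unfolding D2_def using o2 by (intro sum.cong) auto
              have lb: "\<forall>j<m. - B < D1 R j \<and> - B < D2 R j" using Bs_bound unfolding B_def by blast
              have tru: "\<forall>i<m. z i \<longleftrightarrow> (D1 R i \<le> c1 \<and> D2 R i \<le> c2)"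
                using lab sum_Rt1[of r1 r2] sum_Rt2[of r1 r2] unfolding D1_def D2_def R_def by simp
              have "hyp n (out_r1 n s6) (out_r2 n s6) (out_c1 n s6) (out_c2 n s6) (x i) = z i" if i: "i < m" for i
                using classify[OF lb tru i] unfolding hyp_def d1 d2 oc by auto
              then show "t \<le> 18*n + 4 \<and> FINAL s6" using h u1 u2 unfolding FINAL_def by auto
            qed
          qed
        qed
      qed
    qed
  qed
qed

end

lemma time_bound:
  fixes n m :: nat assumes "1 \<le> n" "3*n \<le> m"
  shows "((12*n + 4) * m + 2) + (((2*m + 30*n + (18*n+6)*m + 8) * (3*n) + 2)
     + ((4*n + 2) + (((12*n + 7) * m + 3) + (((12*n + 11) * m + 4) + (18*n + 4))))) \<le> 400 * m * n\<^sup>2"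
proof -
  define q where "q = m * (n * n)"
  have m1: "1 \<le> m" using assms by simp
  have a: "m \<le> q" unfolding q_def using assms by simp
  have b: "n * m \<le> q" unfolding q_def using assms by simp
  have c: "n * n \<le> q" unfolding q_def using m1 by simp
  have d: "n \<le> q" using c assms by (metis le_trans mult_le_mono1 mult_1)
  have e: "1 \<le> q" using assms m1 unfolding q_def by simp
  have "((12*n + 4) * m + 2) + (((2*m + 30*n + (18*n+6)*m + 8) * (3*n) + 2)
     + ((4*n + 2) + (((12*n + 7) * m + 3) + (((12*n + 11) * m + 4) + (18*n + 4)))))
     = 60 * (n*m) + 22 * m + 90 * (n*n) + 54 * q + 46 * n + 17"
    unfolding q_def by (simp add: algebra_simps)
  also have "\<dots> \<le> 400 * q" using a b c d e by linarith
  finally show ?thesis unfolding q_def by (simp add: power2_eq_square mult.assoc)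
qed

lemma lemma4_aux:
  fixes n m :: nat and F x y z
  assumes h: "admissible_F n F \<and> mm_instance n m F x y z \<and> m \<ge> 3*n \<and> has_3n_indep n m x"
  shows "\<exists>t s'. exec PROG (init_state n m x y z) t s' \<and> t \<le> 400 * m * n\<^sup>2 \<and>
        unit_vec (3*n) (out_r1 n s') \<and> unit_vec (3*n) (out_r2 n s') \<and>
        (\<forall>i<m. hyp n (out_r1 n s') (out_r2 n s') (out_c1 n s') (out_c2 n s') (x i) = z i)"
proof -
  have n1: "1 \<le> n"
  proof (rule ccontr)
    assume "\<not> 1 \<le> n"
    then have "n = 0" by simp
    then show False using h unfolding mm_instance_def unit_vec_def by auto
  qed
  interpret L n m x y z using n1 h by unfold_locales auto
  have M: "wp PROG (init_state n m x y z) (\<lambda>t s'. t \<le> ((12*n + 4) * m + 2) + (((2*m + 30*n + (18*n+6)*m + 8) * (3*n) + 2)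
     + ((4*n + 2) + (((12*n + 7) * m + 3) + (((12*n + 11) * m + 4) + (18*n + 4))))) \<and> FINAL s')"
    using main[of F] h by blast
  have T: "((12*n + 4) * m + 2) + (((2*m + 30*n + (18*n+6)*m + 8) * (3*n) + 2)
     + ((4*n + 2) + (((12*n + 7) * m + 3) + (((12*n + 11) * m + 4) + (18*n + 4))))) \<le> 400 * m * n\<^sup>2" using time_bound[OF n1, of m] h by blast
  have "wp PROG (init_state n m x y z) (\<lambda>t s'. t \<le> 400 * m * n\<^sup>2 \<and> FINAL s')"
  proof (rule wp_mono[OF M])
    fix t s' assume "t \<le> ((12*n + 4) * m + 2) + (((2*m + 30*n + (18*n+6)*m + 8) * (3*n) + 2)
     + ((4*n + 2) + (((12*n + 7) * m + 3) + (((12*n + 11) * m + 4) + (18*n + 4))))) \<and> FINAL s'"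
    then show "t \<le> 400 * m * n\<^sup>2 \<and> FINAL s'" using T le_trans by blast
  qed
  then show ?thesis unfolding wp_def FINAL_def by blast
qed


theorem lemma4:
  "\<exists>(prog :: com) (C :: nat). \<forall>n m F x y z.
     admissible_F n F \<and> mm_instance n m F x y z \<and> m \<ge> 3*n \<and> has_3n_indep n m x \<longrightarrow>
     (\<exists>t s'. exec prog (init_state n m x y z) t s' \<and> t \<le> C * m * n\<^sup>2 \<and>
        unit_vec (3*n) (out_r1 n s') \<and> unit_vec (3*n) (out_r2 n s') \<and>
        (\<forall>i<m. hyp n (out_r1 n s') (out_r2 n s') (out_c1 n s') (out_c2 n s') (x i) = z i))"

  by (rule exI[of _ PROG], rule exI[of _ "400::nat"]) (use lemma4_aux in blast)

end
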